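(* Let Assumptions 1 and 2 hold and let $K<\mu<1$. There exists a constant $R_\mu>0$ such that, for every $\tau\in(0,1)$, if $x^{(0)}\in U\cap\Sigma$ satisfies $0<\|r^{(0)}\|_2\le R_\mu\tau^{2p}$ and one runs version P of the restarted Anderson–Pulay acceleration with parameter $\tau$ (or version A when $\Sigma=\mathbb{R}^n$), then the sequences $(x^{(k)})$, $(r^{(k)})$ are well defined and, as long as $r^{(k)}\ne0$: $$m_k\le\min(k,p),\qquad \|c^{(k)}\|_\infty\le C_{m_k}\Big(1+\frac{1}{(\tau(1-\mu))^{m_k}}\Big),\qquad \|r^{(k+1)}\|_2\le\mu^{m_k+1}\|r^{(k-m_k)}\|_2,$$ where $C_{m_k}>0$ depends only on $m_k$. Consequently $\|r^{(k)}\|_2\le\mu^k\|r^{(0)}\|_2$ for all $k\in\mathbb{N}$ (local r-linear convergence). Moreover there exists a constant $\Gamma>0$ independent of $\tau$ such that, whenever a restart occurs at step $k+1$ (i.e. $m_{k+1}=0$), $$\big(1-K(1+\tau)\big)\|r^{(k+1)}\|_2\le\Big(K\tau+\frac{\Gamma}{\tau^{2m_k}}\|r^{(k-m_k)}\|_2\Big)\|r^{(k-m_k)}\|_2 .$$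
   Context: All norms $\|\cdot\|_2$ are Euclidean. Let $n,p\ge1$ be integers, $\Sigma$ a smooth submanifold of $\mathbb{R}^n$, $V\subset\mathbb{R}^n$ open, $f\in\mathscr{C}^2(V,\mathbb{R}^p)$, $g\in\mathscr{C}^2(V,\Sigma)$, and $x_*\in V\cap\Sigma$ with $g(x_* )=x_*$, $f(x_* )=0$. Assumption 1: there is $K\in(0,1)$ with $\|f(g(x))\|_2\le K\|f(x)\|_2$ for all $x\in V\cap g^{-1}(V)\cap\Sigma$. Assumption 2: there is $\sigma>0$ with $\sigma\|x-x_*\|_2\le\|f(x)\|_2$ for all $x\in V\cap\Sigma$. $U\subset V\cap g^{-1}(V)$ is a fixed open neighbourhood of $x_*$ such that: (i) for all $x,y\in U$, $\|f(x)-f(y)\|_2\le 2\|\mathrm{D}f(x_* )\|_2\|x-y\|_2$ and $\|f(g(x))-f(g(y))\|_2\le 2\|\mathrm{D}f(x_* )\circ \mathrm{D}g(x_* )\|_2\|x-y\|_2$; (ii) there are $L,L'>0$ with $\|f(x)-\mathrm{D}f(x_* )(x-x_* )\|_2\le\frac L2\|x-x_*\|_2^2$ and $\|g(x)-x_*-\mathrm{D}g(x_* )(x-x_* )\|_2\le\frac{L'}2\|x-x_*\|_2^2$ on $U$; (iii) $U$ is a tubular neighbourhood of $\Sigma\cap U$ on which the nearest-point projection $P_\Sigma$ onto $\Sigma$ is well defined and smooth, and for some $M>0$, $\|P_\Sigma(x)-(x_*+P_{T_{x_*}\Sigma}(x-x_* ))\|_2\le\frac M2\|x-x_*\|_2^2$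 on $U$ ($P_{T_{x_*}\Sigma}$ the orthogonal projector onto the tangent space at $x_*$). Restarted Anderson–Pulay acceleration with parameter $\tau\in(0,1)$: given $x^{(0)}$, set $r^{(0)}=f(x^{(0)})$, $m_0=0$. At step $k$: if $m_k=0$, set $c^{(k)}=(1)$ and $x^{(k+1)}=g(x^{(k)})$; otherwise let $c^{(k)}=(c^{(k)}_0,\dots,c^{(k)}_{m_k})$ minimise $\|\sum_{i=0}^{m_k}c_i r^{(k-m_k+i)}\|_2$ subject to $\sum_i c_i=1$, and set $x^{(k+1)}=g\big(\sum_{i=0}^{m_k}c^{(k)}_i x^{(k-m_k+i)}\big)$ (version P) or $x^{(k+1)}=\sum_{i=0}^{m_k}c^{(k)}_i g(x^{(k-m_k+i)})$ (version A, used only when $\Sigma=\mathbb{R}^n$). Then $r^{(k+1)}=f(x^{(k+1)})$; with $s^{(j)}=r^{(j)}-r^{(k-m_k)}$ for $j=k-m_k+1,\dots,k+1$ and $\Pi_k$ the orthogonal projector onto $\mathrm{span}\{s^{(k-m_k+1)},\dots,s^{(k)}\}$ ($\Pi_k=0$ if $m_k=0$): if $\tau\|s^{(k+1)}\|_2>\|(I-\Pi_k)s^{(k+1)}\|_2$ set $m_{k+1}=0$ (restart), else $m_{k+1}=m_k+1$. Convention: if $r^{(k_{\rm stop})}=0$ for some $k_{\rm stop}$, then $x^{(k)}=x^{(k_{\rm stop})}$, $r^{(k)}=0$, $m_k=0$ for all $k\ge k_{\rm stop}$. *)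

theory Defs
  imports "HOL-Analysis.Analysis"
begin

fun iter_pderiv :: "'a::euclidean_space list \<Rightarrow> ('a \<Rightarrow> 'b::real_normed_vector) \<Rightarrow> 'a \<Rightarrow> 'b" where
  "iter_pderiv [] f = f"
| "iter_pderiv (v # vs) f = (\<lambda>x. frechet_derivative (iter_pderiv vs f) (at x) v)"

definition Ck_on :: "nat \<Rightarrow> 'a::euclidean_space set \<Rightarrow> ('a \<Rightarrow> 'b::real_normed_vector) \<Rightarrow> bool" where
  "Ck_on k S f \<longleftrightarrow> open S \<and>
     (\<forall>vs. set vs \<subseteq> Basis \<and> length vs < k \<longrightarrow> (\<forall>x\<in>S. iter_pderiv vs f differentiable (at x))) \<and>
     (\<forall>vs. set vs \<subseteq> Basis \<and> length vs \<le> k \<longrightarrow> continuous_on S (iter_pderiv vs f))"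

definition smooth_on :: "'a::euclidean_space set \<Rightarrow> ('a \<Rightarrow> 'b::real_normed_vector) \<Rightarrow> bool" where
  "smooth_on S f \<longleftrightarrow> (\<forall>k. Ck_on k S f)"

definition smooth_submanifold :: "'a::euclidean_space set \<Rightarrow> bool" where
  "smooth_submanifold \<Sigma> \<longleftrightarrow> (\<exists>d. \<forall>x\<in>\<Sigma>. \<exists>W W' (\<psi>::'a \<Rightarrow> 'a) \<psi>' L.
      open W \<and> x \<in> W \<and> open W' \<and> smooth_on W \<psi> \<and> smooth_on W' \<psi>' \<and>
      \<psi> ` W = W' \<and> (\<forall>y\<in>W. \<psi>' (\<psi> y) = y) \<and> (\<forall>z\<in>W'. \<psi> (\<psi>' z) = z) \<and>
      subspace L \<and> dim L = d \<and> \<psi> ` (\<Sigma> \<inter> W) = W' \<inter> L)"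

definition tangent_space :: "'a::euclidean_space set \<Rightarrow> 'a \<Rightarrow> 'a set" where
  "tangent_space \<Sigma> x = {v. \<exists>(\<gamma>::real \<Rightarrow> 'a) e. e > 0 \<and> \<gamma> 0 = x \<and>
      (\<forall>t. \<bar>t\<bar> < e \<longrightarrow> \<gamma> t \<in> \<Sigma>) \<and> (\<gamma> has_vector_derivative v) (at 0)}"

definition orth_proj :: "'a::real_inner set \<Rightarrow> 'a \<Rightarrow> 'a" where
  "orth_proj T x = (THE y. y \<in> T \<and> (\<forall>z\<in>T. inner (x - y) z = 0))"

definition nearest_proj :: "'a::real_normed_vector set \<Rightarrow> 'a \<Rightarrow> 'a" where
  "nearest_proj S x = (THE y. y \<in> S \<and> (\<forall>z\<in>S. dist x y \<le> dist x z))"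

text \<open>A run of restarted Anderson--Pulay acceleration with parameter tau started at x0.
 vA = True selects version A, vA = False version P.  The coefficient vector c^(k) is
 stored as the function i \<mapsto> c k i on indices 0..m k (c k is any minimiser).
 Stopping convention: once r k = 0, the iterate is frozen and m k = 0.\<close>

definition AP_run :: "('a::euclidean_space \<Rightarrow> 'b::euclidean_space) \<Rightarrow> ('a \<Rightarrow> 'a) \<Rightarrow> real \<Rightarrow> bool \<Rightarrow> 'a
    \<Rightarrow> (nat \<Rightarrow> 'a) \<Rightarrow> (nat \<Rightarrow> 'b) \<Rightarrow> (nat \<Rightarrow> nat) \<Rightarrow> (nat \<Rightarrow> nat \<Rightarrow> real) \<Rightarrow> bool" where
  "AP_run f g \<tau> vA x0 x r m c \<longleftrightarrow>
     x 0 = x0 \<and> m 0 = 0 \<and> (\<forall>k. r k = f (x k)) \<and>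
     (\<forall>k. r k = 0 \<longrightarrow> m k = 0 \<and> x (Suc k) = x k) \<and>
     (\<forall>k. r k \<noteq> 0 \<longrightarrow>
        (\<Sum>i\<le>m k. c k i) = 1 \<and>
        (\<forall>d. (\<Sum>i\<le>m k. d i) = 1 \<longrightarrow>
           norm (\<Sum>i\<le>m k. c k i *\<^sub>R r (k - m k + i)) \<le> norm (\<Sum>i\<le>m k. d i *\<^sub>R r (k - m k + i))) \<and>
        x (Suc k) = (if vA then (\<Sum>i\<le>m k. c k i *\<^sub>R g (x (k - m k + i)))
                     else g (\<Sum>i\<le>m k. c k i *\<^sub>R x (k - m k + i))) \<and>
        (r (Suc k) \<noteq> 0 \<longrightarrow>
          (let s = (\<lambda>j. r j - r (k - m k));
               Pk = orth_proj (span {s j | j. k - m k + 1 \<le> j \<and> j \<le> k})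
           in m (Suc k) = (if \<tau> * norm (s (Suc k)) > norm (s (Suc k) - Pk (s (Suc k)))
                           then 0 else Suc (m k)))))"

end

theory Submission
  imports Defs
begin





lemma orth_proj_unique:
  fixes S :: "'a::euclidean_space set"
  assumes "subspace S" "y \<in> S" "\<forall>z\<in>S. inner (x - y) z = 0"
  shows "orth_proj S x = y"
  unfolding orth_proj_def
proof (rule the_equality)
  show "y \<in> S \<and> (\<forall>z\<in>S. inner (x - y) z = 0)" using assms by auto
  fix y' assume h: "y' \<in> S \<and> (\<forall>z\<in>S. inner (x - y') z = 0)"
  have d: "y' - y \<in> S" using h assms subspace_diff by blast
  have "inner (x - y) (y' - y) - inner (x - y') (y' - y) = 0" using h assms d by auto
  moreover have "inner (x - y) (y' - y) - inner (x - y') (y' - y) = inner (y' - y) (y' - y)"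
    by (simp add: inner_diff_left)
  ultimately have "inner (y' - y) (y' - y) = 0" by simp
  then show "y' = y" by simp
qed

lemma orth_proj_char:
  fixes S :: "'a::euclidean_space set"
  assumes "subspace S"
  shows "orth_proj S x \<in> S \<and> (\<forall>z\<in>S. inner (x - orth_proj S x) z = 0)"
proof -
  obtain y z where y: "y \<in> span S" and z: "\<And>w. w \<in> span S \<Longrightarrow> orthogonal z w" and x: "x = y + z"
    using orthogonal_subspace_decomp_exists by blast
  have sp: "span S = S" using assms by (simp add: span_eq_iff)
  have "orth_proj S x = y"
    apply (rule orth_proj_unique[OF assms])
    using y z x sp by (auto simp: orthogonal_def)
  then show ?thesis using y z x sp by (auto simp: orthogonal_def)
qed

lemma orth_proj_linear:
  fixes S :: "'a::euclidean_space set"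
  assumes "subspace S"
  shows "linear (orth_proj S)"
proof (rule linearI)
  fix x y
  show "orth_proj S (x + y) = orth_proj S x + orth_proj S y"
    apply (rule orth_proj_unique[OF assms])
    using orth_proj_char[OF assms, of x] orth_proj_char[OF assms, of y]
     apply (simp add: assms subspace_add)
    using orth_proj_char[OF assms, of x] orth_proj_char[OF assms, of y]
    by (simp add: inner_diff_left inner_add_left)
next
  fix c x
  show "orth_proj S (c *\<^sub>R x) = c *\<^sub>R orth_proj S x"
    apply (rule orth_proj_unique[OF assms])
    using orth_proj_char[OF assms, of x] 
     apply (simp add: assms subspace_scale)
    using orth_proj_char[OF assms, of x] by (simp add: scaleR_right_diff_distrib[symmetric])
qed

lemma orth_proj_id:
  fixes S :: "'a::euclidean_space set"
  assumes "subspace S" "x \<in> S"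
  shows "orth_proj S x = x"
  using orth_proj_unique[OF assms(1) assms(2)] by simp

lemma orth_proj_norm:
  fixes S :: "'a::euclidean_space set"
  assumes "subspace S"
  shows "norm (x - orth_proj S x) \<le> norm x"
proof -
  let ?p = "orth_proj S x"
  have o: "inner (x - ?p) ?p = 0" using orth_proj_char[OF assms, of x] by auto
  have "(norm x)\<^sup>2 = (norm (x - ?p))\<^sup>2 + (norm ?p)\<^sup>2"
  proof -
    have "x = (x - ?p) + ?p" by simp
    then have "(norm x)\<^sup>2 = (norm ((x - ?p) + ?p))\<^sup>2" by simp
    also have "\<dots> = (norm (x - ?p))\<^sup>2 + (norm ?p)\<^sup>2"
      using o by (intro norm_add_Pythagorean) (simp add: orthogonal_def)
    finally show ?thesis .
  qed
  then have "(norm (x - ?p))\<^sup>2 \<le> (norm x)\<^sup>2" by simp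
  then show ?thesis by (simp add: power2_le_iff_abs_le)
qed



lemma coef_bound:
  fixes s :: "nat \<Rightarrow> 'b::euclidean_space" and \<gamma> :: "nat \<Rightarrow> real"
  assumes "\<forall>j\<in>{1..t}. \<alpha> \<le> norm (s j - orth_proj (span (s ` {1..<j})) (s j))"
    "\<forall>j\<in>{1..t}. norm (s j) \<le> bb" "\<alpha> > 0"
    "norm (\<Sum>j\<in>{1..t}. \<gamma> j *\<^sub>R s j) \<le> B"
  shows "\<forall>j\<in>{1..t}. \<bar>\<gamma> j\<bar> \<le> B * (1 + bb / \<alpha>) ^ (t - j) / \<alpha>"
  using assms
proof (induction t arbitrary: B)
  case 0
  then show ?case by simp
next
  case (Suc t)
  define S where "S = span (s ` {1..<Suc t})"
  have sub: "subspace S" unfolding S_def by simp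
  define Q where "Q = (\<lambda>x. x - orth_proj S x)"
  have lQ: "linear Q" unfolding Q_def using orth_proj_linear[OF sub]
    by (intro linearI) (auto simp: linear_add linear_scale scaleR_right_diff_distrib)
  have Q0: "Q x = 0" if "x \<in> S" for x unfolding Q_def using orth_proj_id[OF sub that] by simp
  define v0 where "v0 = (\<Sum>j\<in>{1..t}. \<gamma> j *\<^sub>R s j)"
  have v0S: "v0 \<in> S" unfolding v0_def S_def
    by (intro span_sum span_mul span_base) auto
  have vsplit: "(\<Sum>j\<in>{1..Suc t}. \<gamma> j *\<^sub>R s j) = v0 + \<gamma> (Suc t) *\<^sub>R s (Suc t)"
    unfolding v0_def by simp
  have Qv: "Q (\<Sum>j\<in>{1..Suc t}. \<gamma> j *\<^sub>R s j) = \<gamma> (Suc t) *\<^sub>R Q (s (Suc t))"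
    unfolding vsplit using lQ Q0[OF v0S] by (simp add: linear_add linear_scale)
  have nQ: "norm (Q x) \<le> norm x" for x unfolding Q_def using orth_proj_norm[OF sub] by blast
  have a_le: "\<alpha> \<le> norm (Q (s (Suc t)))" using Suc.prems(1) unfolding Q_def S_def by auto
  have "\<bar>\<gamma> (Suc t)\<bar> * \<alpha> \<le> \<bar>\<gamma> (Suc t)\<bar> * norm (Q (s (Suc t)))"
    using a_le by (simp add: mult_left_mono)
  also have "\<dots> = norm (Q (\<Sum>j\<in>{1..Suc t}. \<gamma> j *\<^sub>R s j))" using Qv by simp
  also have "\<dots> \<le> B" using nQ[of "\<Sum>j\<in>{1..Suc t}. \<gamma> j *\<^sub>R s j"] Suc.prems(4) by linarith
  finally have gl: "\<bar>\<gamma> (Suc t)\<bar> \<le> B / \<alpha>" using Suc.prems(3) by (simp add: pos_le_divide_eq)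
  have B0: "0 \<le> B" using Suc.prems(4) norm_ge_zero order_trans by blast
  have "norm v0 \<le> norm (\<Sum>j\<in>{1..Suc t}. \<gamma> j *\<^sub>R s j) + norm (\<gamma> (Suc t) *\<^sub>R s (Suc t))"
    using vsplit norm_triangle_ineq4[of "\<Sum>j\<in>{1..Suc t}. \<gamma> j *\<^sub>R s j" "\<gamma> (Suc t) *\<^sub>R s (Suc t)"]
    by simp
  also have "\<dots> \<le> B + B / \<alpha> * bb"
  proof -
    have "norm (s (Suc t)) \<le> bb" using Suc.prems(2) by auto
    then have "\<bar>\<gamma> (Suc t)\<bar> * norm (s (Suc t)) \<le> B / \<alpha> * bb"
      using gl by (meson abs_ge_zero mult_mono norm_ge_zero order_trans)
    then show ?thesis using Suc.prems(4) by simp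
  qed
  also have "\<dots> = B * (1 + bb / \<alpha>)" by (simp add: algebra_simps)
  finally have nv0: "norm v0 \<le> B * (1 + bb / \<alpha>)" .
  have IH: "\<forall>j\<in>{1..t}. \<bar>\<gamma> j\<bar> \<le> B * (1 + bb / \<alpha>) * (1 + bb / \<alpha>) ^ (t - j) / \<alpha>"
    using Suc.IH[of "B * (1 + bb / \<alpha>)"] Suc.prems nv0 unfolding v0_def by auto
  show ?case
  proof
    fix j assume j: "j \<in> {1..Suc t}"
    show "\<bar>\<gamma> j\<bar> \<le> B * (1 + bb / \<alpha>) ^ (Suc t - j) / \<alpha>"
    proof (cases "j = Suc t")
      case True then show ?thesis using gl by simp
    next
      case False
      then have "j \<in> {1..t}" "Suc t - j = Suc (t - j)" using j by auto
      then show ?thesis using IH by (simp add: mult.assoc)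
    qed
  qed
qed



lemma Ck_diff:
  assumes "Ck_on k S f" "0 < k" "x \<in> S"
  shows "f differentiable (at x)"
  using assms unfolding Ck_on_def
  by (metis empty_subsetI iter_pderiv.simps(1) list.size(3) set_empty)

lemma smooth_diff:
  assumes "smooth_on S f" "x \<in> S"
  shows "f differentiable (at x)"
  using assms Ck_diff[of 1 S f x] unfolding smooth_on_def by auto

lemma tangent_cont:
  assumes "(\<gamma> has_vector_derivative v) (at 0)" "open W" "\<gamma> 0 \<in> W"
  shows "\<exists>d>0. \<forall>t. \<bar>t\<bar> < d \<longrightarrow> \<gamma> t \<in> W"
proof -
  have "isCont \<gamma> 0" using has_vector_derivative_continuous[OF assms(1)] by simp
  then have "eventually (\<lambda>t. \<gamma> t \<in> W) (at 0)"
    using assms(2,3) unfolding isCont_def by (simp add: topological_tendstoD)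
  then obtain d where d: "d>0" "\<And>t. t \<noteq> 0 \<and> dist t 0 < d \<Longrightarrow> \<gamma> t \<in> W"
    unfolding eventually_at by auto
  show ?thesis using d assms(3) by (metis dist_real_def diff_zero)
qed

lemma tangent_subspace:
  fixes \<Sigma> :: "'a::euclidean_space set"
  assumes man: "smooth_submanifold \<Sigma>" and xs: "xs \<in> \<Sigma>"
  shows "subspace (tangent_space \<Sigma> xs)"
proof -
  have "\<exists>d. \<forall>x\<in>\<Sigma>. \<exists>W W' (\<psi>::'a \<Rightarrow> 'a) \<psi>' L.
      open W \<and> x \<in> W \<and> open W' \<and> smooth_on W \<psi> \<and> smooth_on W' \<psi>' \<and>
      \<psi> ` W = W' \<and> (\<forall>y\<in>W. \<psi>' (\<psi> y) = y) \<and> (\<forall>z\<in>W'. \<psi> (\<psi>' z) = z) \<and>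
      subspace L \<and> dim L = d \<and> \<psi> ` (\<Sigma> \<inter> W) = W' \<inter> L"
    using man unfolding smooth_submanifold_def .
  then obtain d where "\<forall>x\<in>\<Sigma>. \<exists>W W' (\<psi>::'a \<Rightarrow> 'a) \<psi>' L.
      open W \<and> x \<in> W \<and> open W' \<and> smooth_on W \<psi> \<and> smooth_on W' \<psi>' \<and>
      \<psi> ` W = W' \<and> (\<forall>y\<in>W. \<psi>' (\<psi> y) = y) \<and> (\<forall>z\<in>W'. \<psi> (\<psi>' z) = z) \<and>
      subspace L \<and> dim L = d \<and> \<psi> ` (\<Sigma> \<inter> W) = W' \<inter> L" ..
  then have "\<exists>W W' (\<psi>::'a \<Rightarrow> 'a) \<psi>' L.
      open W \<and> xs \<in> W \<and> open W' \<and> smooth_on W \<psi> \<and> smooth_on W' \<psi>' \<and>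
      \<psi> ` W = W' \<and> (\<forall>y\<in>W. \<psi>' (\<psi> y) = y) \<and> (\<forall>z\<in>W'. \<psi> (\<psi>' z) = z) \<and>
      subspace L \<and> dim L = d \<and> \<psi> ` (\<Sigma> \<inter> W) = W' \<inter> L" using xs by (rule bspec)
  then obtain W W' \<psi> \<psi>' L where
    "open W \<and> xs \<in> W \<and> open W' \<and> smooth_on W (\<psi>::'a\<Rightarrow>'a) \<and> smooth_on W' \<psi>' \<and>
      \<psi> ` W = W' \<and> (\<forall>y\<in>W. \<psi>' (\<psi> y) = y) \<and> (\<forall>z\<in>W'. \<psi> (\<psi>' z) = z) \<and>
      subspace L \<and> dim L = d \<and> \<psi> ` (\<Sigma> \<inter> W) = W' \<inter> L" by (elim exE)
  then have W: "open W" "xs \<in> W" "open W'" "smooth_on W \<psi>" "smooth_on W' \<psi>'"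
      "\<psi> ` W = W'" "\<forall>y\<in>W. \<psi>' (\<psi> y) = y" "subspace L" "\<psi> ` (\<Sigma> \<inter> W) = W' \<inter> L"
    by simp_all
  define D where "D = frechet_derivative \<psi> (at xs)"
  define D' where "D' = frechet_derivative \<psi>' (at (\<psi> xs))"
  have pxs: "\<psi> xs \<in> W'" using W(6) imageI[OF W(2), of \<psi>] by simp
  have hD: "(\<psi> has_derivative D) (at xs)"
    unfolding D_def by (rule frechet_derivative_works[THEN iffD1, OF smooth_diff[OF W(4) W(2)]])
  have hD': "(\<psi>' has_derivative D') (at (\<psi> xs))"
    unfolding D'_def by (rule frechet_derivative_works[THEN iffD1, OF smooth_diff[OF W(5) pxs]])
  have lD: "linear D" using hD has_derivative_linear by blast
  have lD': "linear D'" using hD' has_derivative_linear by blast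
  have "((\<lambda>y. \<psi>' (\<psi> y)) has_derivative (\<lambda>h. D' (D h))) (at xs)"
    using has_derivative_compose[OF hD hD'] by simp
  moreover have "((\<lambda>y. \<psi>' (\<psi> y)) has_derivative (\<lambda>h. h)) (at xs)"
    apply (rule has_derivative_transform_within_open[OF has_derivative_ident W(1) W(2)])
    using W(7) by simp
  ultimately have DD: "\<And>h. D' (D h) = h"
    using has_derivative_unique by metis
  have inL: "\<psi> y \<in> L" if "y \<in> \<Sigma>" "y \<in> W" for y
    using W(9) that by blast
  have backS: "\<psi>' z \<in> \<Sigma>" if "z \<in> W'" "z \<in> L" for z
  proof -
    have "z \<in> \<psi> ` (\<Sigma> \<inter> W)" using that W(9) by simp
    then obtain w where "w \<in> \<Sigma> \<inter> W" "z = \<psi> w" by blast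
    then show ?thesis using W(7) by auto
  qed
  show ?thesis
    unfolding subspace_def
  proof (intro conjI ballI allI)
    show "0 \<in> tangent_space \<Sigma> xs"
      unfolding tangent_space_def
      using xs by (intro CollectI exI[of _ "\<lambda>t. xs"] exI[of _ 1] conjI)
         (simp_all add: has_vector_derivative_def)
  next
    fix c :: real and v assume v: "v \<in> tangent_space \<Sigma> xs"
    then obtain \<gamma> e where g: "e > 0" "\<gamma> 0 = xs" "\<forall>t. \<bar>t\<bar> < e \<longrightarrow> \<gamma> t \<in> \<Sigma>"
       "(\<gamma> has_vector_derivative v) (at 0)"
      unfolding tangent_space_def by blast
    show "c *\<^sub>R v \<in> tangent_space \<Sigma> xs"
    proof (cases "c = 0")
      case True then show ?thesis
      unfolding tangent_space_def
      using xs by (intro CollectI exI[of _ "\<lambda>t. xs"] exI[of _ 1] conjI)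
         (simp_all add: has_vector_derivative_def)
    next
      case False
      have h1: "((\<lambda>t. c * t) has_derivative (\<lambda>t. c * t)) (at 0)"
        by (auto intro!: derivative_eq_intros)
      have h2: "(\<gamma> has_derivative (\<lambda>t. t *\<^sub>R v)) (at (c * 0))"
        using g(4) by (simp add: has_vector_derivative_def)
      have "((\<lambda>t. \<gamma> (c * t)) has_derivative (\<lambda>t. (c * t) *\<^sub>R v)) (at 0)"
        using has_derivative_compose[OF h1 h2] by simp
      then have der: "((\<lambda>t. \<gamma> (c * t)) has_vector_derivative (c *\<^sub>R v)) (at 0)"
        by (simp add: has_vector_derivative_def mult.commute)
      have "\<forall>t. \<bar>t\<bar> < e / \<bar>c\<bar> \<longrightarrow> \<gamma> (c * t) \<in> \<Sigma>"
      proof (intro allI impI)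
        fix t assume "\<bar>t\<bar> < e / \<bar>c\<bar>"
        then have "\<bar>t\<bar> * \<bar>c\<bar> < e" using False by (simp add: pos_less_divide_eq)
        then have "\<bar>c * t\<bar> < e" by (simp add: abs_mult mult.commute)
        then show "\<gamma> (c * t) \<in> \<Sigma>" using g(3) by blast
      qed
      then show ?thesis unfolding tangent_space_def
        using der g False by (intro CollectI exI[of _ "\<lambda>t. \<gamma> (c * t)"] exI[of _ "e / \<bar>c\<bar>"] conjI) simp_all
    qed
  next
    fix v w assume v: "v \<in> tangent_space \<Sigma> xs" and w: "w \<in> tangent_space \<Sigma> xs"
    obtain \<gamma>1 e1 where g1: "e1 > 0" "\<gamma>1 0 = xs" "\<forall>t. \<bar>t\<bar> < e1 \<longrightarrow> \<gamma>1 t \<in> \<Sigma>"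
       "(\<gamma>1 has_vector_derivative v) (at 0)"
      using v unfolding tangent_space_def by blast
    obtain \<gamma>2 e2 where g2: "e2 > 0" "\<gamma>2 0 = xs" "\<forall>t. \<bar>t\<bar> < e2 \<longrightarrow> \<gamma>2 t \<in> \<Sigma>"
       "(\<gamma>2 has_vector_derivative w) (at 0)"
      using w unfolding tangent_space_def by blast
    define \<eta> where "\<eta> = (\<lambda>t. \<psi> (\<gamma>1 t) + \<psi> (\<gamma>2 t) - \<psi> xs)"
    have d1: "(\<gamma>1 has_derivative (\<lambda>t. t *\<^sub>R v)) (at 0)" using g1(4) by (simp add: has_vector_derivative_def)
    have d2: "(\<gamma>2 has_derivative (\<lambda>t. t *\<^sub>R w)) (at 0)" using g2(4) by (simp add: has_vector_derivative_def)
    have hD1: "(\<psi> has_derivative D) (at (\<gamma>1 0))" using hD g1(2) by simp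
    have hD2: "(\<psi> has_derivative D) (at (\<gamma>2 0))" using hD g2(2) by simp
    have deta: "(\<eta> has_derivative (\<lambda>t. D (t *\<^sub>R v) + D (t *\<^sub>R w))) (at 0)"
      unfolding \<eta>_def
      using has_derivative_diff[OF has_derivative_add[OF has_derivative_compose[OF d1 hD1] has_derivative_compose[OF d2 hD2]] has_derivative_const[of "\<psi> xs"]]
      by simp
    have eta0: "\<eta> 0 = \<psi> xs" unfolding \<eta>_def using g1(2) g2(2) by simp
    have hD'e: "(\<psi>' has_derivative D') (at (\<eta> 0))" using hD' eta0 by simp
    have "((\<lambda>t. \<psi>' (\<eta> t)) has_derivative (\<lambda>t. D' (D (t *\<^sub>R v) + D (t *\<^sub>R w)))) (at 0)"
      using has_derivative_compose[OF deta hD'e] by simp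
    moreover have "(\<lambda>t. D' (D (t *\<^sub>R v) + D (t *\<^sub>R w))) = (\<lambda>t. t *\<^sub>R (v + w))"
    proof
      fix t
      have "D (t *\<^sub>R v) + D (t *\<^sub>R w) = D (t *\<^sub>R (v + w))"
        using lD by (simp add: linear_add linear_scale scaleR_add_right)
      then show "D' (D (t *\<^sub>R v) + D (t *\<^sub>R w)) = t *\<^sub>R (v + w)" using DD by simp
    qed
    ultimately have der: "((\<lambda>t. \<psi>' (\<eta> t)) has_vector_derivative (v + w)) (at 0)"
      by (simp add: has_vector_derivative_def)
    have deta': "(\<eta> has_vector_derivative (D v + D w)) (at 0)"
      using deta lD by (simp add: has_vector_derivative_def linear_scale scaleR_add_right)
    obtain a1 where a1: "a1 > 0" "\<forall>t. \<bar>t\<bar> < a1 \<longrightarrow> \<gamma>1 t \<in> W"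
      using tangent_cont[OF g1(4) W(1)] g1(2) W(2) by auto
    obtain a2 where a2: "a2 > 0" "\<forall>t. \<bar>t\<bar> < a2 \<longrightarrow> \<gamma>2 t \<in> W"
      using tangent_cont[OF g2(4) W(1)] g2(2) W(2) by auto
    obtain a3 where a3: "a3 > 0" "\<forall>t. \<bar>t\<bar> < a3 \<longrightarrow> \<eta> t \<in> W'"
      using tangent_cont[OF deta' W(3)] eta0 pxs by auto
    define e where "e = min (min e1 e2) (min a1 (min a2 a3))"
    have "\<forall>t. \<bar>t\<bar> < e \<longrightarrow> \<psi>' (\<eta> t) \<in> \<Sigma>"
    proof (intro allI impI)
      fix t assume t: "\<bar>t\<bar> < e"
      have tt: "\<bar>t\<bar> < e1" "\<bar>t\<bar> < e2" "\<bar>t\<bar> < a1" "\<bar>t\<bar> < a2" "\<bar>t\<bar> < a3"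
        using t unfolding e_def by simp_all
      have "\<gamma>1 t \<in> \<Sigma>" "\<gamma>1 t \<in> W" "\<gamma>2 t \<in> \<Sigma>" "\<gamma>2 t \<in> W" "\<eta> t \<in> W'"
        using tt g1(3) g2(3) a1(2) a2(2) a3(2) by simp_all
      then have "\<psi> (\<gamma>1 t) \<in> L" "\<psi> (\<gamma>2 t) \<in> L" "\<psi> xs \<in> L" using inL xs W(2) by auto
      then have "\<eta> t \<in> L" unfolding \<eta>_def using W(8) by (simp add: subspace_add subspace_diff)
      then show "\<psi>' (\<eta> t) \<in> \<Sigma>" using backS \<open>\<eta> t \<in> W'\<close> by blast
    qed
    moreover have "e > 0" unfolding e_def using g1(1) g2(1) a1(1) a2(1) a3(1) by simp
    moreover have "\<psi>' (\<eta> 0) = xs" using eta0 W(7) W(2) by simp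
    ultimately show "v + w \<in> tangent_space \<Sigma> xs"
      unfolding tangent_space_def using der
      by (intro CollectI exI[of _ "\<lambda>t. \<psi>' (\<eta> t)"] exI[of _ e] conjI) simp_all
  qed
qed






lemma sum_scale_bound:
  fixes v :: "nat \<Rightarrow> 'a::real_normed_vector"
  assumes "\<forall>i\<le>t. norm (v i) \<le> B" "(\<Sum>i\<le>t. \<bar>cc i\<bar>) \<le> S" "0 \<le> B"
  shows "norm (\<Sum>i\<le>t. cc i *\<^sub>R v i) \<le> S * B"
proof -
  have "norm (\<Sum>i\<le>t. cc i *\<^sub>R v i) \<le> (\<Sum>i\<le>t. norm (cc i *\<^sub>R v i))" by (rule norm_sum)
  also have "\<dots> \<le> (\<Sum>i\<le>t. \<bar>cc i\<bar> * B)"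
    by (rule sum_mono) (use assms(1) in \<open>auto intro: mult_left_mono\<close>)
  also have "\<dots> = (\<Sum>i\<le>t. \<bar>cc i\<bar>) * B" by (simp add: sum_distrib_right)
  also have "\<dots> \<le> S * B" using assms(2,3) by (simp add: mult_right_mono)
  finally show ?thesis .
qed

lemma S_ge1:
  assumes "(\<Sum>i\<le>t. cc i) = (1::real)" "(\<Sum>i\<le>t. \<bar>cc i\<bar>) \<le> S"
  shows "1 \<le> S"
proof -
  have "\<bar>\<Sum>i\<le>t. cc i\<bar> \<le> (\<Sum>i\<le>t. \<bar>cc i\<bar>)" by (rule sum_abs)
  then show ?thesis using assms by simp
qed

lemma affine_shift:
  fixes xx :: "nat \<Rightarrow> 'a::real_vector"
  assumes "(\<Sum>i\<le>t. cc i) = 1"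
  shows "(\<Sum>i\<le>t. cc i *\<^sub>R xx i) - xs = (\<Sum>i\<le>t. cc i *\<^sub>R (xx i - xs))"
proof -
  have "(\<Sum>i\<le>t. cc i *\<^sub>R xs) = xs" using assms by (simp add: scaleR_sum_left[symmetric])
  then show ?thesis by (simp add: scaleR_diff_right sum_subtractf)
qed

lemma lin_comb:
  assumes "linear D"
  shows "D (\<Sum>i\<le>t. cc i *\<^sub>R v i) = (\<Sum>i\<le>t. cc i *\<^sub>R D (v i))"
  using assms by (simp add: linear_sum linear_scale)

lemma stepP:
  fixes f :: "'a::euclidean_space \<Rightarrow> 'b::euclidean_space" and g :: "'a \<Rightarrow> 'a" and t :: nat
  assumes lD: "linear D" and lQ: "linear Q"
    and fT: "\<forall>x\<in>U. norm (f x - D (x - xs)) \<le> L/2 * (norm (x - xs))\<^sup>2"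
    and PT: "\<forall>x\<in>U. norm (P x - (xs + Q (x - xs))) \<le> M/2 * (norm (x - xs))\<^sup>2"
    and PU: "\<forall>x\<in>U. P x \<in> U \<and> P x \<in> \<Sigma>"
    and Pid: "\<forall>x\<in>U. x \<in> \<Sigma> \<longrightarrow> P x = x"
    and fL: "\<forall>x\<in>U. \<forall>y\<in>U. norm (f x - f y) \<le> A1 * norm (x - y)"
    and fgL: "\<forall>x\<in>U. \<forall>y\<in>U. norm (f (g x) - f (g y)) \<le> A2 * norm (x - y)"
    and Kc: "\<forall>x\<in>U. x \<in> \<Sigma> \<longrightarrow> norm (f (g x)) \<le> K * norm (f x)"
    and ball: "ball xs \<delta> \<subseteq> U"
    and xx: "\<forall>i\<le>t. xx i \<in> \<Sigma> \<and> norm (xx i - xs) \<le> \<epsilon>"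
    and cs: "(\<Sum>i\<le>t. cc i) = 1" and S: "(\<Sum>i\<le>t. \<bar>cc i\<bar>) \<le> S" and Se: "S * \<epsilon> < \<delta>"
    and nn: "0 \<le> K" "0 \<le> L" "0 \<le> M" "0 \<le> A1" "0 \<le> A2" "0 \<le> \<epsilon>"
  shows "(\<Sum>i\<le>t. cc i *\<^sub>R xx i) \<in> U \<and>
    norm (f (g (\<Sum>i\<le>t. cc i *\<^sub>R xx i))) \<le> K * norm (\<Sum>i\<le>t. cc i *\<^sub>R f (xx i)) + (K*L + (A2 + K*A1)*M) * S\<^sup>2 * \<epsilon>\<^sup>2"
proof -
  define y where "y = (\<Sum>i\<le>t. cc i *\<^sub>R xx i)"
  have S1: "1 \<le> S" using S_ge1[OF cs S] .
  have ysh: "y - xs = (\<Sum>i\<le>t. cc i *\<^sub>R (xx i - xs))" unfolding y_def using affine_shift[OF cs] .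
  have ny: "norm (y - xs) \<le> S * \<epsilon>" unfolding ysh
    by (rule sum_scale_bound) (use xx nn S in auto)
  have yU: "y \<in> U" using ball ny Se by (auto simp: dist_norm norm_minus_commute)
  have xU: "xx i \<in> U" if "i \<le> t" for i
  proof -
    have "\<epsilon> \<le> S * \<epsilon>" using S1 nn(6) by (simp add: mult_le_cancel_right1)
    then show ?thesis using xx that ball Se by (force simp: dist_norm norm_minus_commute)
  qed
  have ny2: "(norm (y - xs))\<^sup>2 \<le> S\<^sup>2 * \<epsilon>\<^sup>2"
    using power_mono[OF ny norm_ge_zero, of 2] by (simp add: power_mult_distrib)
  have e2: "(norm (xx i - xs))\<^sup>2 \<le> \<epsilon>\<^sup>2" if "i \<le> t" for i
    using xx that by (simp add: power_mono)
  have Se2: "S * \<epsilon>\<^sup>2 \<le> S\<^sup>2 * \<epsilon>\<^sup>2"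
    using S1 by (simp add: power2_eq_square mult_right_mono)
  have fy: "norm (f y - (\<Sum>i\<le>t. cc i *\<^sub>R f (xx i))) \<le> L * S\<^sup>2 * \<epsilon>\<^sup>2"
  proof -
    have Dy: "D (y - xs) = (\<Sum>i\<le>t. cc i *\<^sub>R D (xx i - xs))"
      unfolding ysh using lin_comb[OF lD] .
    have "f y - (\<Sum>i\<le>t. cc i *\<^sub>R f (xx i)) =
        (f y - D (y - xs)) - (\<Sum>i\<le>t. cc i *\<^sub>R (f (xx i) - D (xx i - xs)))"
      unfolding Dy by (simp add: scaleR_diff_right sum_subtractf)
    also have "norm \<dots> \<le> norm (f y - D (y - xs)) + norm (\<Sum>i\<le>t. cc i *\<^sub>R (f (xx i) - D (xx i - xs)))"
      by (rule norm_triangle_ineq4)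
    also have "\<dots> \<le> L/2 * (S\<^sup>2 * \<epsilon>\<^sup>2) + S * (L/2 * \<epsilon>\<^sup>2)"
    proof (rule add_mono)
      show "norm (f y - D (y - xs)) \<le> L/2 * (S\<^sup>2 * \<epsilon>\<^sup>2)"
        using order_trans[OF fT[rule_format, OF yU] mult_left_mono[OF ny2]] nn(2) by simp
      show "norm (\<Sum>i\<le>t. cc i *\<^sub>R (f (xx i) - D (xx i - xs))) \<le> S * (L/2 * \<epsilon>\<^sup>2)"
      proof (rule sum_scale_bound)
        show "\<forall>i\<le>t. norm (f (xx i) - D (xx i - xs)) \<le> L / 2 * \<epsilon>\<^sup>2"
          using order_trans[OF fT[rule_format, OF xU] mult_left_mono[OF e2]] nn(2) by simp
      qed (use S nn in auto)
    qed
    also have "\<dots> \<le> L * S\<^sup>2 * \<epsilon>\<^sup>2"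
      using mult_left_mono[OF Se2, of "L/2"] nn(2) by (simp add: algebra_simps)
    finally show ?thesis .
  qed
  have dP: "norm (y - P y) \<le> M * S\<^sup>2 * \<epsilon>\<^sup>2"
  proof -
    define e where "e = (\<lambda>i. P (xx i) - (xs + Q (xx i - xs)))"
    have ei: "norm (e i) \<le> M/2 * \<epsilon>\<^sup>2" if "i \<le> t" for i
      unfolding e_def using order_trans[OF PT[rule_format, OF xU[OF that]] mult_left_mono[OF e2[OF that]]] nn(3) by simp
    have ei': "e i = (xx i - xs) - Q (xx i - xs)" if "i \<le> t" for i
      unfolding e_def using Pid xU[OF that] xx that by auto
    have Qy: "Q (y - xs) = (\<Sum>i\<le>t. cc i *\<^sub>R Q (xx i - xs))"
      unfolding ysh using lin_comb[OF lQ] .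
    have "y - P y = (\<Sum>i\<le>t. cc i *\<^sub>R e i) - (P y - (xs + Q (y - xs)))"
    proof -
      have "(\<Sum>i\<le>t. cc i *\<^sub>R e i) = (\<Sum>i\<le>t. cc i *\<^sub>R ((xx i - xs) - Q (xx i - xs)))"
        using ei' by (intro sum.cong) auto
      also have "\<dots> = (y - xs) - Q (y - xs)"
      proof -
        have "(y - xs) - Q (y - xs) = (\<Sum>i\<le>t. cc i *\<^sub>R (xx i - xs)) - (\<Sum>i\<le>t. cc i *\<^sub>R Q (xx i - xs))"
          using Qy ysh by simp
        then show ?thesis by (simp add: scaleR_diff_right sum_subtractf)
      qed
      finally show ?thesis by (simp add: algebra_simps)
    qed
    also have "norm \<dots> \<le> S * (M/2 * \<epsilon>\<^sup>2) + M/2 * (S\<^sup>2 * \<epsilon>\<^sup>2)"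
    proof -
      have "norm (\<Sum>i\<le>t. cc i *\<^sub>R e i) \<le> S * (M/2 * \<epsilon>\<^sup>2)"
        by (rule sum_scale_bound) (use ei S nn in auto)
      moreover have "norm (P y - (xs + Q (y - xs))) \<le> M/2 * (S\<^sup>2 * \<epsilon>\<^sup>2)"
        using order_trans[OF PT[rule_format, OF yU] mult_left_mono[OF ny2]] nn(3) by simp
      ultimately show ?thesis using norm_triangle_ineq4[of "\<Sum>i\<le>t. cc i *\<^sub>R e i" "P y - (xs + Q (y - xs))"] by linarith
    qed
    also have "\<dots> \<le> M * S\<^sup>2 * \<epsilon>\<^sup>2"
      using mult_left_mono[OF Se2, of "M/2"] nn(3) by (simp add: algebra_simps)
    finally show ?thesis .
  qed
  have PyU: "P y \<in> U" "P y \<in> \<Sigma>" using PU yU by auto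
  have "norm (f (g y)) \<le> norm (f (g (P y))) + A2 * norm (y - P y)"
    using fgL yU PyU(1) norm_triangle_ineq2[of "f (g y)" "f (g (P y))"] by fastforce
  also have "\<dots> \<le> K * norm (f (P y)) + A2 * norm (y - P y)"
    using Kc PyU by simp
  also have "\<dots> \<le> K * (norm (f y) + A1 * norm (y - P y)) + A2 * norm (y - P y)"
  proof -
    have "norm (f (P y)) \<le> norm (f y) + A1 * norm (y - P y)"
      using fL yU PyU(1) norm_triangle_ineq2[of "f (P y)" "f y"] by (fastforce simp: norm_minus_commute)
    then show ?thesis using nn(1) by (simp add: mult_left_mono)
  qed
  also have "\<dots> \<le> K * (norm (\<Sum>i\<le>t. cc i *\<^sub>R f (xx i)) + L * S\<^sup>2 * \<epsilon>\<^sup>2 + A1 * (M * S\<^sup>2 * \<epsilon>\<^sup>2))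
      + A2 * (M * S\<^sup>2 * \<epsilon>\<^sup>2)"
  proof -
    have "norm (f y) \<le> norm (\<Sum>i\<le>t. cc i *\<^sub>R f (xx i)) + L * S\<^sup>2 * \<epsilon>\<^sup>2"
      using fy norm_triangle_ineq2[of "f y" "\<Sum>i\<le>t. cc i *\<^sub>R f (xx i)"] by linarith
    moreover have "A1 * norm (y - P y) \<le> A1 * (M * S\<^sup>2 * \<epsilon>\<^sup>2)" using dP nn(4) by (simp add: mult_left_mono)
    moreover have "A2 * norm (y - P y) \<le> A2 * (M * S\<^sup>2 * \<epsilon>\<^sup>2)" using dP nn(5) by (simp add: mult_left_mono)
    ultimately show ?thesis using nn(1)
      by (smt (verit) distrib_left mult_left_mono)
  qed
  also have "\<dots> = K * norm (\<Sum>i\<le>t. cc i *\<^sub>R f (xx i)) + (K*L + (A2 + K*A1)*M) * S\<^sup>2 * \<epsilon>\<^sup>2"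
    by (simp add: algebra_simps)
  finally show ?thesis using yU unfolding y_def by simp
qed



lemma stepA:
  fixes f :: "'a::euclidean_space \<Rightarrow> 'b::euclidean_space" and g :: "'a \<Rightarrow> 'a" and t :: nat
  assumes lD: "linear D" and lE: "linear E"
    and fT: "\<forall>x\<in>U. norm (f x - D (x - xs)) \<le> L/2 * (norm (x - xs))\<^sup>2"
    and gT: "\<forall>x\<in>U. norm (g x - xs - E (x - xs)) \<le> L'/2 * (norm (x - xs))\<^sup>2"
    and nDh: "\<forall>h. norm (D h) \<le> nD * norm h" and nEh: "\<forall>h. norm (E h) \<le> nE * norm h"
    and Kc: "\<forall>x\<in>U. norm (f (g x)) \<le> K * norm (f x)"
    and ball: "ball xs \<delta> \<subseteq> U"
    and xx: "\<forall>i\<le>t. norm (xx i - xs) \<le> \<epsilon>"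
    and cs: "(\<Sum>i\<le>t. cc i) = 1" and S: "(\<Sum>i\<le>t. \<bar>cc i\<bar>) \<le> S"
    and Se: "(nE + 1) * (S * \<epsilon>) < \<delta>" and Le: "L' * (S * \<epsilon>) \<le> 2"
    and nn: "0 \<le> K" "0 \<le> L" "0 \<le> L'" "0 \<le> nD" "0 \<le> nE" "0 \<le> \<epsilon>"
  shows "(\<Sum>i\<le>t. cc i *\<^sub>R xx i) \<in> U \<and> (\<Sum>i\<le>t. cc i *\<^sub>R g (xx i)) \<in> U \<and>
    norm (f (\<Sum>i\<le>t. cc i *\<^sub>R g (xx i))) \<le> K * norm (\<Sum>i\<le>t. cc i *\<^sub>R f (xx i))
       + (K*L + nD*L' + L*(nE+1)\<^sup>2) * S\<^sup>2 * \<epsilon>\<^sup>2"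
proof -
  define y where "y = (\<Sum>i\<le>t. cc i *\<^sub>R xx i)"
  define z where "z = (\<Sum>i\<le>t. cc i *\<^sub>R g (xx i))"
  have S1: "1 \<le> S" using S_ge1[OF cs S] .
  have Sen: "0 \<le> S * \<epsilon>" using S1 nn(6) by simp
  have eSe: "\<epsilon> \<le> S * \<epsilon>" using S1 nn(6) by (simp add: mult_le_cancel_right1)
  have small: "a \<le> (nE + 1) * a" if "0 \<le> a" for a using nn(5) that by (simp add: algebra_simps)
  have ysh: "y - xs = (\<Sum>i\<le>t. cc i *\<^sub>R (xx i - xs))" unfolding y_def using affine_shift[OF cs] .
  have ny: "norm (y - xs) \<le> S * \<epsilon>" unfolding ysh
    by (rule sum_scale_bound) (use xx nn S in auto)
  have yU: "y \<in> U" using ball ny Se small[OF Sen] by (auto simp: dist_norm norm_minus_commute)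
  have xU: "xx i \<in> U" if "i \<le> t" for i
    using xx that ball Se eSe small[OF Sen] by (force simp: dist_norm norm_minus_commute)
  have ny2: "(norm (y - xs))\<^sup>2 \<le> S\<^sup>2 * \<epsilon>\<^sup>2"
    using power_mono[OF ny norm_ge_zero, of 2] by (simp add: power_mult_distrib)
  have e2: "(norm (xx i - xs))\<^sup>2 \<le> \<epsilon>\<^sup>2" if "i \<le> t" for i
    using xx that by (simp add: power_mono)
  have Se2: "S * \<epsilon>\<^sup>2 \<le> S\<^sup>2 * \<epsilon>\<^sup>2"
    using S1 by (simp add: power2_eq_square mult_right_mono)
  have fy: "norm (f y - (\<Sum>i\<le>t. cc i *\<^sub>R f (xx i))) \<le> L * S\<^sup>2 * \<epsilon>\<^sup>2"
  proof -
    have Dy: "D (y - xs) = (\<Sum>i\<le>t. cc i *\<^sub>R D (xx i - xs))"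
      unfolding ysh using lin_comb[OF lD] .
    have "f y - (\<Sum>i\<le>t. cc i *\<^sub>R f (xx i)) =
        (f y - D (y - xs)) - (\<Sum>i\<le>t. cc i *\<^sub>R (f (xx i) - D (xx i - xs)))"
      unfolding Dy by (simp add: scaleR_diff_right sum_subtractf)
    also have "norm \<dots> \<le> norm (f y - D (y - xs)) + norm (\<Sum>i\<le>t. cc i *\<^sub>R (f (xx i) - D (xx i - xs)))"
      by (rule norm_triangle_ineq4)
    also have "\<dots> \<le> L/2 * (S\<^sup>2 * \<epsilon>\<^sup>2) + S * (L/2 * \<epsilon>\<^sup>2)"
    proof (rule add_mono)
      show "norm (f y - D (y - xs)) \<le> L/2 * (S\<^sup>2 * \<epsilon>\<^sup>2)"
        using order_trans[OF fT[rule_format, OF yU] mult_left_mono[OF ny2]] nn(2) by simp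
      show "norm (\<Sum>i\<le>t. cc i *\<^sub>R (f (xx i) - D (xx i - xs))) \<le> S * (L/2 * \<epsilon>\<^sup>2)"
      proof (rule sum_scale_bound)
        show "\<forall>i\<le>t. norm (f (xx i) - D (xx i - xs)) \<le> L / 2 * \<epsilon>\<^sup>2"
          using order_trans[OF fT[rule_format, OF xU] mult_left_mono[OF e2]] nn(2) by simp
      qed (use S nn in auto)
    qed
    also have "\<dots> \<le> L * S\<^sup>2 * \<epsilon>\<^sup>2"
      using mult_left_mono[OF Se2, of "L/2"] nn(2) by (simp add: algebra_simps)
    finally show ?thesis .
  qed
  define eg where "eg = (\<lambda>i. g (xx i) - xs - E (xx i - xs))"
  have egb: "norm (eg i) \<le> L'/2 * \<epsilon>\<^sup>2" if "i \<le> t" for i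
    unfolding eg_def using order_trans[OF gT[rule_format, OF xU[OF that]] mult_left_mono[OF e2[OF that]]] nn(3) by simp
  have Lee: "L' * \<epsilon> \<le> 2" using Le mult_left_mono[OF eSe nn(3)] by linarith
  have gxb: "norm (g (xx i) - xs) \<le> (nE + 1) * \<epsilon>" if "i \<le> t" for i
  proof -
    have "g (xx i) - xs = E (xx i - xs) + eg i" unfolding eg_def by simp
    then have "norm (g (xx i) - xs) \<le> nE * norm (xx i - xs) + L'/2 * \<epsilon>\<^sup>2"
      using nEh egb[OF that] norm_triangle_ineq[of "E (xx i - xs)" "eg i"] by (smt (verit))
    also have "\<dots> \<le> nE * \<epsilon> + \<epsilon>"
    proof -
      have "nE * norm (xx i - xs) \<le> nE * \<epsilon>" using xx that nn(5) by (simp add: mult_left_mono)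
      moreover have "L'/2 * \<epsilon>\<^sup>2 = (L' * \<epsilon>) / 2 * \<epsilon>" by (simp add: power2_eq_square)
      moreover have "(L' * \<epsilon>) / 2 * \<epsilon> \<le> \<epsilon>" using mult_right_mono[of "(L' * \<epsilon>) / 2" 1 \<epsilon>] Lee nn(6) by simp
      ultimately show ?thesis by linarith
    qed
    finally show ?thesis by (simp add: algebra_simps)
  qed
  have zsh: "z - xs = (\<Sum>i\<le>t. cc i *\<^sub>R (g (xx i) - xs))" unfolding z_def using affine_shift[OF cs] .
  have nz: "norm (z - xs) \<le> S * ((nE + 1) * \<epsilon>)" unfolding zsh
    by (rule sum_scale_bound) (use gxb nn S in auto)
  have zU: "z \<in> U" using ball nz Se by (auto simp: dist_norm norm_minus_commute algebra_simps)
  have zsh2: "z - xs = E (y - xs) + (\<Sum>i\<le>t. cc i *\<^sub>R eg i)"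
  proof -
    have "E (y - xs) = (\<Sum>i\<le>t. cc i *\<^sub>R E (xx i - xs))" unfolding ysh using lin_comb[OF lE] .
    then show ?thesis unfolding zsh eg_def
      by (simp add: scaleR_diff_right sum_subtractf sum.distrib algebra_simps)
  qed
  define ey where "ey = g y - xs - E (y - xs)"
  have eyb: "norm ey \<le> L'/2 * (S\<^sup>2 * \<epsilon>\<^sup>2)"
    unfolding ey_def using order_trans[OF gT[rule_format, OF yU] mult_left_mono[OF ny2]] nn(3) by simp
  have ngy: "norm (g y - xs) \<le> (nE + 1) * (S * \<epsilon>)"
  proof -
    have "g y - xs = E (y - xs) + ey" unfolding ey_def by simp
    then have "norm (g y - xs) \<le> nE * norm (y - xs) + L'/2 * (S\<^sup>2 * \<epsilon>\<^sup>2)"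
      using nEh eyb norm_triangle_ineq[of "E (y - xs)" ey] by (smt (verit))
    also have "\<dots> \<le> nE * (S * \<epsilon>) + S * \<epsilon>"
    proof -
      have "nE * norm (y - xs) \<le> nE * (S * \<epsilon>)" using ny nn(5) by (simp add: mult_left_mono)
      moreover have "L'/2 * (S\<^sup>2 * \<epsilon>\<^sup>2) = (L' * (S * \<epsilon>)) / 2 * (S * \<epsilon>)" by (simp add: power2_eq_square)
      moreover have "(L' * (S * \<epsilon>)) / 2 * (S * \<epsilon>) \<le> S * \<epsilon>" using mult_right_mono[of "(L' * (S * \<epsilon>)) / 2" 1 "S * \<epsilon>"] Le Sen by simp
      ultimately show ?thesis by linarith
    qed
    finally show ?thesis by (simp add: algebra_simps)
  qed
  have gyU: "g y \<in> U" using ball ngy Se by (auto simp: dist_norm norm_minus_commute)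
  have sq: "(norm (w - xs))\<^sup>2 \<le> (nE+1)\<^sup>2 * S\<^sup>2 * \<epsilon>\<^sup>2" if "norm (w - xs) \<le> (nE + 1) * (S * \<epsilon>)" for w
    using power_mono[OF that norm_ge_zero, of 2] by (simp add: power_mult_distrib)
  have fz: "norm (f z - D (z - xs)) \<le> L/2 * ((nE+1)\<^sup>2 * S\<^sup>2 * \<epsilon>\<^sup>2)"
    using order_trans[OF fT[rule_format, OF zU] mult_left_mono[OF sq]] nz nn(2) by (simp add: algebra_simps)
  have fgy: "norm (f (g y) - D (g y - xs)) \<le> L/2 * ((nE+1)\<^sup>2 * S\<^sup>2 * \<epsilon>\<^sup>2)"
    using order_trans[OF fT[rule_format, OF gyU] mult_left_mono[OF sq[OF ngy]]] nn(2) by simp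
  have dd: "(z - xs) - (g y - xs) = (\<Sum>i\<le>t. cc i *\<^sub>R eg i) - ey"
    unfolding zsh2 ey_def by simp
  have ndd: "norm (D ((z - xs) - (g y - xs))) \<le> nD * L' * S\<^sup>2 * \<epsilon>\<^sup>2"
  proof -
    have "norm ((\<Sum>i\<le>t. cc i *\<^sub>R eg i) - ey) \<le> S * (L'/2 * \<epsilon>\<^sup>2) + L'/2 * (S\<^sup>2 * \<epsilon>\<^sup>2)"
    proof -
      have "norm (\<Sum>i\<le>t. cc i *\<^sub>R eg i) \<le> S * (L'/2 * \<epsilon>\<^sup>2)"
        by (rule sum_scale_bound) (use egb S nn in auto)
      then show ?thesis using eyb norm_triangle_ineq4[of "\<Sum>i\<le>t. cc i *\<^sub>R eg i" ey] by linarith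
    qed
    also have "\<dots> \<le> L' * S\<^sup>2 * \<epsilon>\<^sup>2"
      using mult_left_mono[OF Se2, of "L'/2"] nn(3) by (simp add: algebra_simps)
    finally have "norm ((\<Sum>i\<le>t. cc i *\<^sub>R eg i) - ey) \<le> L' * S\<^sup>2 * \<epsilon>\<^sup>2" .
    then have "nD * norm ((\<Sum>i\<le>t. cc i *\<^sub>R eg i) - ey) \<le> nD * (L' * S\<^sup>2 * \<epsilon>\<^sup>2)"
      using nn(4) by (rule mult_left_mono)
    then show ?thesis unfolding dd using nDh[rule_format, of "(\<Sum>i\<le>t. cc i *\<^sub>R eg i) - ey"]
      by (simp add: mult.assoc)
  qed
  have lin: "D (z - xs) - D (g y - xs) = D ((z - xs) - (g y - xs))" using lD by (simp add: linear_diff)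
  have eqf: "f z - f (g y) = (f z - D (z - xs)) - (f (g y) - D (g y - xs)) + D ((z - xs) - (g y - xs))"
    using lin by (simp add: algebra_simps)
  have "norm (f z - f (g y)) \<le> L/2 * ((nE+1)\<^sup>2 * S\<^sup>2 * \<epsilon>\<^sup>2) + L/2 * ((nE+1)\<^sup>2 * S\<^sup>2 * \<epsilon>\<^sup>2) + nD * L' * S\<^sup>2 * \<epsilon>\<^sup>2"
    unfolding eqf using fz fgy ndd norm_triangle_ineq4[of "f z - D (z - xs)" "f (g y) - D (g y - xs)"]
      norm_triangle_ineq[of "(f z - D (z - xs)) - (f (g y) - D (g y - xs))" "D ((z - xs) - (g y - xs))"]
    by linarith
  then have fzgy: "norm (f z) \<le> norm (f (g y)) + (L * (nE+1)\<^sup>2 + nD * L') * S\<^sup>2 * \<epsilon>\<^sup>2"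
    using norm_triangle_ineq2[of "f z" "f (g y)"] by (simp add: algebra_simps)
  have "norm (f (g y)) \<le> K * norm (f y)" using Kc yU by simp
  also have "\<dots> \<le> K * (norm (\<Sum>i\<le>t. cc i *\<^sub>R f (xx i)) + L * S\<^sup>2 * \<epsilon>\<^sup>2)"
    using fy norm_triangle_ineq2[of "f y" "\<Sum>i\<le>t. cc i *\<^sub>R f (xx i)"] nn(1)
    by (intro mult_left_mono) linarith+
  finally have "norm (f z) \<le> K * (norm (\<Sum>i\<le>t. cc i *\<^sub>R f (xx i)) + L * S\<^sup>2 * \<epsilon>\<^sup>2) + (L * (nE+1)\<^sup>2 + nD * L') * S\<^sup>2 * \<epsilon>\<^sup>2"
    using fzgy by linarith
  then show ?thesis using yU zU unfolding y_def z_def by (simp add: algebra_simps)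
qed





definition Cc :: "nat \<Rightarrow> real" where "Cc j = 1 + 2 * real (j+1) * 3^j"
definition Zc :: "nat \<Rightarrow> real \<Rightarrow> real" where "Zc p \<mu> = 4 * (real p + 1)^2 * (Cc p)^2 / (1 - \<mu>)^(2*p)"

lemma Cc_pos: "Cc j \<ge> 1" unfolding Cc_def by simp

lemma Cc_mono: "i \<le> j \<Longrightarrow> Cc i \<le> Cc j"
  unfolding Cc_def by (intro add_left_mono mult_mono) (auto intro: power_increasing)

lemma sum_split0: "(\<Sum>i\<le>(t::nat). F i) = F 0 + (\<Sum>i\<in>{1..t}. F i)"
proof -
  have "{..t} = insert 0 {1..t}" by auto
  then show ?thesis by simp
qed

lemma span_image_sum:
  fixes h :: "nat \<Rightarrow> 'a::real_vector"
  assumes "finite A" "v \<in> span (h ` A)"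
  shows "\<exists>\<gamma>. v = (\<Sum>l\<in>A. \<gamma> l *\<^sub>R h l)"
proof -
  have "span (h ` A) \<subseteq> {v. \<exists>\<gamma>. v = (\<Sum>l\<in>A. \<gamma> l *\<^sub>R h l)}"
  proof (rule span_minimal)
    show "h ` A \<subseteq> {v. \<exists>\<gamma>. v = (\<Sum>l\<in>A. \<gamma> l *\<^sub>R h l)}"
    proof
      fix v assume "v \<in> h ` A"
      then obtain a where a: "a \<in> A" "v = h a" by blast
      have "(\<Sum>l\<in>A. (if l = a then 1 else 0) *\<^sub>R h l) = (\<Sum>l\<in>A. if l = a then h l else 0)"
        by (rule sum.cong) auto
      also have "\<dots> = h a" using a assms(1) by simp
      finally have "(\<Sum>l\<in>A. (if l = a then 1 else 0) *\<^sub>R h l) = h a" .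
      then show "v \<in> {v. \<exists>\<gamma>. v = (\<Sum>l\<in>A. \<gamma> l *\<^sub>R h l)}" using a by (metis (mono_tags) mem_Collect_eq)
    qed
    show "subspace {v. \<exists>\<gamma>. v = (\<Sum>l\<in>A. \<gamma> l *\<^sub>R h l)}"
      unfolding subspace_def
    proof (intro conjI ballI allI)
      show "0 \<in> {v. \<exists>\<gamma>. v = (\<Sum>l\<in>A. \<gamma> l *\<^sub>R h l)}"
        by (rule CollectI, rule exI[of _ "\<lambda>l. 0"]) simp
    next
      fix u v assume "u \<in> {v. \<exists>\<gamma>. v = (\<Sum>l\<in>A. \<gamma> l *\<^sub>R h l)}" "v \<in> {v. \<exists>\<gamma>. v = (\<Sum>l\<in>A. \<gamma> l *\<^sub>R h l)}"
      then obtain \<gamma>1 \<gamma>2 where "u = (\<Sum>l\<in>A. \<gamma>1 l *\<^sub>R h l)" "v = (\<Sum>l\<in>A. \<gamma>2 l *\<^sub>R h l)" by blast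
      then have "u + v = (\<Sum>l\<in>A. (\<gamma>1 l + \<gamma>2 l) *\<^sub>R h l)" by (simp add: sum.distrib scaleR_add_left)
      then show "u + v \<in> {v. \<exists>\<gamma>. v = (\<Sum>l\<in>A. \<gamma> l *\<^sub>R h l)}"
        by (simp only: mem_Collect_eq) (rule exI[of _ "\<lambda>l. \<gamma>1 l + \<gamma>2 l"], simp)
    next
      fix a :: real and u assume "u \<in> {v. \<exists>\<gamma>. v = (\<Sum>l\<in>A. \<gamma> l *\<^sub>R h l)}"
      then obtain \<gamma>1 where "u = (\<Sum>l\<in>A. \<gamma>1 l *\<^sub>R h l)" by blast
      then have "a *\<^sub>R u = (\<Sum>l\<in>A. (a * \<gamma>1 l) *\<^sub>R h l)" by (simp add: scaleR_sum_right)
      then show "a *\<^sub>R u \<in> {v. \<exists>\<gamma>. v = (\<Sum>l\<in>A. \<gamma> l *\<^sub>R h l)}"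
        by (simp only: mem_Collect_eq) (rule exI[of _ "\<lambda>l. a * \<gamma>1 l"], simp)
    qed
  qed
  then show ?thesis using assms(2) by blast
qed

lemma set_idx: "{h j | j. (b::nat) + 1 \<le> j \<and> j \<le> b + t} = (\<lambda>l. h (b + l)) ` {1..t}"
proof (rule set_eqI, rule iffI)
  fix v assume "v \<in> {h j | j. b + 1 \<le> j \<and> j \<le> b + t}"
  then obtain j where j: "v = h j" "b + 1 \<le> j" "j \<le> b + t" by blast
  then have "j - b \<in> {1..t}" "b + (j - b) = j" by auto
  then show "v \<in> (\<lambda>l. h (b + l)) ` {1..t}" using j by (metis image_eqI)
next
  fix v assume "v \<in> (\<lambda>l. h (b + l)) ` {1..t}"
  then obtain l where "l \<in> {1..t}" "v = h (b + l)" by blast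
  then show "v \<in> {h j | j. b + 1 \<le> j \<and> j \<le> b + t}" by force
qed

lemma arith_coef:
  fixes X :: real
  assumes "0 < X" "X < 1" "1 \<le> j" "j \<le> t"
  shows "2 * (1 + 2 / X) ^ (t - j) / X \<le> 2 * 3 ^ t / X ^ t"
proof -
  have a: "1 + 2 / X \<le> 3 / X" using assms by (simp add: field_simps)
  have "(1 + 2 / X) ^ (t - j) \<le> (3 / X) ^ (t - j)"
    by (rule power_mono[OF a]) (use assms in auto)
  then have "2 * (1 + 2 / X) ^ (t - j) / X \<le> 2 * (3 / X) ^ (t - j) / X"
    using assms by (simp add: divide_right_mono)
  also have "\<dots> = 2 * 3 ^ (t - j) / X ^ (Suc (t - j))" by (simp add: power_divide)
  also have "\<dots> \<le> 2 * 3 ^ t / X ^ t"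
  proof -
    have "(3::real) ^ (t - j) \<le> 3 ^ t" by (rule power_increasing) auto
    moreover have "X ^ t \<le> X ^ (Suc (t - j))" by (rule power_decreasing) (use assms in auto)
    moreover have "0 < X ^ t" using assms by simp
    ultimately show ?thesis
      by (intro frac_le) auto
  qed
  finally show ?thesis .
qed

locale APrun =
  fixes f :: "'a::euclidean_space \<Rightarrow> 'b::euclidean_space" and g :: "'a \<Rightarrow> 'a"
    and \<Sigma> V :: "'a set" and xs :: 'a
    and K \<sigma> \<mu> \<tau> G \<rho> R :: real and vA :: bool
    and x0 :: 'a and x :: "nat \<Rightarrow> 'a" and r :: "nat \<Rightarrow> 'b" and m :: "nat \<Rightarrow> nat" and c :: "nat \<Rightarrow> nat \<Rightarrow> real"
  assumes run: "AP_run f g \<tau> vA x0 x r m c"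
    and K: "0 < K" "K < \<mu>" "\<mu> < 1"
    and tau: "0 < \<tau>" "\<tau> < 1"
    and sig: "\<sigma> > 0" and sigb: "\<And>y. y \<in> V \<Longrightarrow> y \<in> \<Sigma> \<Longrightarrow> \<sigma> * norm (y - xs) \<le> norm (f y)"
    and x0: "x0 \<in> \<Sigma>" "x0 \<in> V" "0 < norm (f x0)" "norm (f x0) \<le> R * \<tau> ^ (2 * DIM('b))"
    and G: "0 \<le> G" and rho: "0 < \<rho>"
    and step: "\<And>(xx::nat \<Rightarrow> 'a) cc t \<epsilon> S. (\<forall>i\<le>t. xx i \<in> \<Sigma> \<and> xx i \<in> V \<and> norm (xx i - xs) \<le> \<epsilon>) \<Longrightarrow>
        (\<Sum>i\<le>t. cc i) = 1 \<Longrightarrow> (\<Sum>i\<le>t. \<bar>cc i\<bar>) \<le> S \<Longrightarrow> 0 \<le> \<epsilon> \<Longrightarrow> S * \<epsilon> \<le> \<rho> \<Longrightarrow>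
      (\<Sum>i\<le>t. cc i *\<^sub>R xx i) \<in> V \<and>
      (if vA then (\<Sum>i\<le>t. cc i *\<^sub>R g (xx i)) else g (\<Sum>i\<le>t. cc i *\<^sub>R xx i)) \<in> \<Sigma> \<and>
      (if vA then (\<Sum>i\<le>t. cc i *\<^sub>R g (xx i)) else g (\<Sum>i\<le>t. cc i *\<^sub>R xx i)) \<in> V \<and>
      norm (f (if vA then (\<Sum>i\<le>t. cc i *\<^sub>R g (xx i)) else g (\<Sum>i\<le>t. cc i *\<^sub>R xx i)))
        \<le> K * norm (\<Sum>i\<le>t. cc i *\<^sub>R f (xx i)) + G * S\<^sup>2 * \<epsilon>\<^sup>2"
    and Rs: "0 \<le> R" "Zc DIM('b) \<mu> * R \<le> \<rho> * \<sigma>" "G * Zc DIM('b) \<mu> * R \<le> (\<mu> - K) * \<mu> ^ DIM('b) * \<sigma>\<^sup>2"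
begin

lemma x_0: "x 0 = x0" and m_0: "m 0 = 0" and rf: "r k = f (x k)"
  and stop: "r k = 0 \<Longrightarrow> m k = 0 \<and> x (Suc k) = x k"
  using run unfolding AP_run_def by auto

lemma live:
  assumes "r k \<noteq> 0"
  shows "(\<Sum>i\<le>m k. c k i) = 1"
    "\<And>d. (\<Sum>i\<le>m k. d i) = 1 \<Longrightarrow>
           norm (\<Sum>i\<le>m k. c k i *\<^sub>R r (k - m k + i)) \<le> norm (\<Sum>i\<le>m k. d i *\<^sub>R r (k - m k + i))"
    "x (Suc k) = (if vA then (\<Sum>i\<le>m k. c k i *\<^sub>R g (x (k - m k + i)))
                     else g (\<Sum>i\<le>m k. c k i *\<^sub>R x (k - m k + i)))"
    "r (Suc k) \<noteq> 0 \<Longrightarrow> m (Suc k) = (if \<tau> * norm (r (Suc k) - r (k - m k)) >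
         norm ((r (Suc k) - r (k - m k)) - orth_proj (span {r j - r (k - m k) | j. k - m k + 1 \<le> j \<and> j \<le> k}) (r (Suc k) - r (k - m k)))
         then 0 else Suc (m k))"
  using run assms unfolding AP_run_def Let_def by auto

lemma r_zero_prop: "r i = 0 \<Longrightarrow> r (i + d) = 0"
proof (induction d)
  case 0 then show ?case by simp
next
  case (Suc d)
  then have "r (i + d) = 0" by simp
  then have "x (Suc (i + d)) = x (i + d)" using stop by blast
  then show ?case using rf \<open>r (i + d) = 0\<close> by (metis add_Suc_right)
qed

lemma r_nz_before: "r k \<noteq> 0 \<Longrightarrow> i \<le> k \<Longrightarrow> r i \<noteq> 0"
  using r_zero_prop[of i "k - i"] by auto

lemma m_le: "m k \<le> k"
proof (induction k)
  case 0 then show ?case using m_0 by simp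
next
  case (Suc k)
  show ?case
  proof (cases "r (Suc k) = 0")
    case True then show ?thesis using stop by simp
  next
    case False
    then have "r k \<noteq> 0" using r_nz_before by auto
    then show ?thesis using live(4)[OF \<open>r k \<noteq> 0\<close> False] Suc by auto
  qed
qed

lemma m_prev:
  assumes "r k \<noteq> 0" "m k = Suc t"
  shows "\<exists>i. k = Suc i \<and> r i \<noteq> 0 \<and> m i = t"
proof -
  obtain i where i: "k = Suc i" using m_le[of k] assms(2) by (cases k) auto
  have ri: "r i \<noteq> 0" using r_nz_before[OF assms(1)] i by auto
  have "m (Suc i) \<noteq> 0" using assms i by simp
  then have "m (Suc i) = Suc (m i)" using live(4)[OF ri] assms(1) i by (auto split: if_splits)
  then show ?thesis using i ri assms by auto
qed

lemma window:
  assumes "r k \<noteq> 0" "n \<le> m k"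
  shows "m (k - n) = m k - n \<and> r (k - n) \<noteq> 0"
  using assms(2)
proof (induction n)
  case 0 then show ?case using assms(1) by simp
next
  case (Suc n)
  then have h: "m (k - n) = m k - n" "r (k - n) \<noteq> 0" by auto
  have "m (k - n) = Suc (m k - Suc n)" using h Suc.prems by simp
  from m_prev[OF h(2) this] obtain i where "k - n = Suc i" "r i \<noteq> 0" "m i = m k - Suc n" by blast
  moreover then have "k - Suc n = i" by simp
  ultimately show ?case by simp
qed

lemma window2:
  assumes "r k \<noteq> 0" "j \<le> m k"
  shows "m (k - m k + j) = j \<and> r (k - m k + j) \<noteq> 0"
proof -
  have "k - (m k - j) = k - m k + j" using m_le[of k] assms(2) by simp
  then show ?thesis using window[OF assms(1), of "m k - j"] assms(2) by simp
qed

end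




lemma arith_Sb:
  fixes \<tau> \<mu> :: real
  assumes "0 < \<tau>" "\<tau> < 1" "0 < \<mu>" "\<mu> < 1" "t \<le> p"
  shows "(2 * (real p + 1) * Cc p / (\<tau> * (1 - \<mu>)) ^ t)\<^sup>2 \<le> Zc p \<mu> / \<tau> ^ (2 * t)"
proof -
  define N where "N = 4 * (real p + 1)^2 * (Cc p)^2"
  have N0: "0 \<le> N" unfolding N_def by simp
  have pw: "\<And>a::real. (a ^ t)\<^sup>2 = a ^ (2 * t)" by (metis mult.commute power_mult)
  have num: "(2 * (real p + 1) * Cc p)\<^sup>2 = N" unfolding N_def by (simp only: power_mult_distrib) (simp add: power2_eq_square)
  have den: "((\<tau> * (1 - \<mu>)) ^ t)\<^sup>2 = \<tau> ^ (2*t) * (1 - \<mu>) ^ (2*t)"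
    unfolding pw[symmetric] by (simp add: power_mult_distrib)
  have lhs: "(2 * (real p + 1) * Cc p / (\<tau> * (1 - \<mu>)) ^ t)\<^sup>2 = N / (\<tau> ^ (2*t) * (1 - \<mu>) ^ (2*t))"
    unfolding power_divide num den ..
  have mon: "(1 - \<mu>) ^ (2*p) \<le> (1 - \<mu>) ^ (2*t)"
    by (rule power_decreasing) (use assms in auto)
  have pos: "0 < (1 - \<mu>) ^ (2*p)" "0 < \<tau> ^ (2*t)" using assms by auto
  have "N / (\<tau> ^ (2*t) * (1 - \<mu>) ^ (2*t)) \<le> N / (\<tau> ^ (2*t) * (1 - \<mu>) ^ (2*p))"
    by (rule divide_left_mono) (use N0 mon pos in \<open>auto intro: mult_left_mono\<close>)
  also have "\<dots> = Zc p \<mu> / \<tau> ^ (2 * t)" unfolding Zc_def N_def by simp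
  finally show ?thesis using lhs by simp
qed

lemma arith_R:
  fixes \<tau> :: real
  assumes "0 < \<tau>" "\<tau> < 1" "t \<le> p" "0 \<le> nb" "nb \<le> R * \<tau> ^ (2 * p)" "Sb2 \<le> Z / \<tau> ^ (2 * t)" "0 \<le> Z" "0 \<le> R"
    "0 \<le> Sb2"
  shows "Sb2 * nb \<le> Z * R"
proof -
  have "Sb2 * nb \<le> Z / \<tau> ^ (2 * t) * (R * \<tau> ^ (2 * p))"
    using assms by (intro mult_mono) auto
  also have "\<dots> = Z * R * (\<tau> ^ (2 * p) / \<tau> ^ (2 * t))" by (simp add: field_simps)
  also have "\<dots> \<le> Z * R"
  proof -
    have "\<tau> ^ (2 * p) \<le> \<tau> ^ (2 * t)" by (rule power_decreasing) (use assms in auto)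
    then have "\<tau> ^ (2 * p) / \<tau> ^ (2 * t) \<le> 1" using assms by simp
    moreover have "0 \<le> Z * R" using assms by simp
    ultimately have "Z * R * (\<tau> ^ (2 * p) / \<tau> ^ (2 * t)) \<le> Z * R * 1" by (rule mult_left_mono)
    then show ?thesis by simp
  qed
  finally show ?thesis .
qed

context APrun begin

definition "Gam = G * Zc DIM('b) \<mu> / \<sigma>\<^sup>2 + 1"

definition "GoodC k \<longleftrightarrow>
  m k \<le> min k DIM('b) \<and>
  (\<forall>i\<le>m k. \<bar>c k i\<bar> \<le> Cc (m k) * (1 + 1 / (\<tau> * (1 - \<mu>)) ^ m k)) \<and>
  norm (r (Suc k)) \<le> \<mu> ^ (m k + 1) * norm (r (k - m k)) \<and>
  (\<Sum>i\<le>m k. c k i *\<^sub>R x (k - m k + i)) \<in> V \<and> x (Suc k) \<in> \<Sigma> \<and> x (Suc k) \<in> V \<and>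
  (m (Suc k) = 0 \<longrightarrow> (1 - K * (1 + \<tau>)) * norm (r (Suc k))
        \<le> (K * \<tau> + Gam / \<tau> ^ (2 * m k) * norm (r (k - m k))) * norm (r (k - m k)))"

lemma inv_upto:
  assumes IH: "\<forall>j<k. r j \<noteq> 0 \<longrightarrow> GoodC j"
  shows "i \<le> k \<Longrightarrow> x i \<in> \<Sigma> \<and> x i \<in> V \<and> norm (r i) \<le> \<mu> ^ i * norm (r 0)"
proof (induction i rule: less_induct)
  case (less i)
  show ?case
  proof (cases i)
    case 0 then show ?thesis using x0 x_0 by simp
  next
    case (Suc j)
    then have jk: "j < k" using less.prems by simp
    have Ij: "x j \<in> \<Sigma> \<and> x j \<in> V \<and> norm (r j) \<le> \<mu> ^ j * norm (r 0)" using less.IH[of j] Suc jk by simp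
    have mu0: "0 \<le> \<mu>" using K by simp
    show ?thesis
    proof (cases "r j = 0")
      case True
      then have "x (Suc j) = x j" using stop by blast
      moreover then have "r (Suc j) = 0" using rf True by metis
      ultimately show ?thesis using Ij Suc mu0 by simp
    next
      case False
      then have Gj: "GoodC j" using IH jk by simp
      have mj: "m j \<le> j" by (rule m_le)
      have Ijm: "norm (r (j - m j)) \<le> \<mu> ^ (j - m j) * norm (r 0)"
        using less.IH[of "j - m j"] Suc jk by simp
      have "norm (r (Suc j)) \<le> \<mu> ^ (m j + 1) * norm (r (j - m j))" using Gj unfolding GoodC_def by simp
      also have "\<dots> \<le> \<mu> ^ (m j + 1) * (\<mu> ^ (j - m j) * norm (r 0))"
        using Ijm mu0 by (simp add: mult_left_mono)
      also have "\<dots> = \<mu> ^ (Suc j) * norm (r 0)"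
        using mj by (simp add: power_add[symmetric] mult.assoc)
      finally show ?thesis using Gj Suc unfolding GoodC_def by simp
    qed
  qed
qed


lemma good_step:
  assumes IH: "\<forall>j<k. r j \<noteq> 0 \<longrightarrow> GoodC j" and rk: "r k \<noteq> 0"
  shows "GoodC k"
proof -
  define t where "t = m k"
  define b where "b = k - t"
  define p where "p = DIM('b)"
  define X where "X = \<tau> * (1 - \<mu>)"
  have X: "0 < X" "X < 1"
  proof -
    have "\<tau> * (1 - \<mu>) \<le> \<tau> * 1" using K tau by (intro mult_left_mono) auto
    then show "X < 1" unfolding X_def using tau by linarith
    show "0 < X" unfolding X_def using K tau by simp
  qed
  have mu: "0 < \<mu>" "\<mu> < 1" using K by auto
  have tk: "t \<le> k" unfolding t_def by (rule m_le)
  have bt: "b + t = k" "k - m k = b" unfolding b_def t_def using m_le[of k] by auto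
  have inv: "\<And>i. i \<le> k \<Longrightarrow> x i \<in> \<Sigma> \<and> x i \<in> V \<and> norm (r i) \<le> \<mu> ^ i * norm (r 0)"
    using inv_upto[OF IH] by blast
  have W1: "\<And>j. j \<le> t \<Longrightarrow> m (b + j) = j \<and> r (b + j) \<noteq> 0"
    using window2[OF rk] unfolding t_def b_def by blast
  define nb where "nb = norm (r b)"
  have nb0: "0 < nb" unfolding nb_def using W1[of 0] by simp
  have W2: "\<And>j. j \<le> t \<Longrightarrow> norm (r (b + j)) \<le> \<mu> ^ j * nb"
  proof -
    fix j assume j: "j \<le> t"
    show "norm (r (b + j)) \<le> \<mu> ^ j * nb"
    proof (cases j)
      case 0 then show ?thesis unfolding nb_def by simp
    next
      case (Suc j')
      define i where "i = b + j'"
      have ik: "i < k" unfolding i_def using j Suc bt by simp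
      have ri: "r i \<noteq> 0" and mi: "m i = j'" unfolding i_def using W1[of j'] j Suc by auto
      have "GoodC i" using IH ik ri by simp
      then have "norm (r (Suc i)) \<le> \<mu> ^ (m i + 1) * norm (r (i - m i))" unfolding GoodC_def by simp
      moreover have "i - m i = b" using mi i_def by simp
      moreover have "Suc i = b + j" using i_def Suc by simp
      moreover have "m i + 1 = j" using mi Suc by simp
      ultimately show ?thesis unfolding nb_def by metis
    qed
  qed
  define sv where "sv = (\<lambda>l. r (b + l) - r b)"
  have W3: "\<And>j. j \<in> {1..t} \<Longrightarrow> \<tau> * norm (sv j) \<le> norm (sv j - orth_proj (span (sv ` {1..<j})) (sv j))"
  proof -
    fix j assume j: "j \<in> {1..t}"
    then obtain j' where j': "j = Suc j'" by (cases j) auto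
    define i where "i = b + j'"
    have ri: "r i \<noteq> 0" and mi: "m i = j'" unfolding i_def using W1[of j'] j j' by auto
    have ri1: "r (Suc i) \<noteq> 0" and mi1: "m (Suc i) = Suc j'" unfolding i_def using W1[of j] j j' by auto
    have ib: "i - m i = b" using mi i_def by simp
    have set: "{r l - r (i - m i) | l. i - m i + 1 \<le> l \<and> l \<le> i} = sv ` {1..<j}"
    proof -
      have "{r l - r b | l. b + 1 \<le> l \<and> l \<le> b + j'} = (\<lambda>l. r (b + l) - r b) ` {1..j'}"
        by (rule set_idx)
      moreover have "{1..j'} = {1..<j}" using j' by auto
      ultimately show ?thesis unfolding ib by (simp add: sv_def i_def)
    qed
    have "\<not> (\<tau> * norm (r (Suc i) - r (i - m i)) >
         norm ((r (Suc i) - r (i - m i)) - orth_proj (span {r l - r (i - m i) | l. i - m i + 1 \<le> l \<and> l \<le> i}) (r (Suc i) - r (i - m i))))"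
      using live(4)[OF ri ri1] mi1 by (auto split: if_splits)
    moreover have "r (Suc i) - r (i - m i) = sv j" unfolding ib using j' by (simp add: sv_def i_def)
    ultimately show "\<tau> * norm (sv j) \<le> norm (sv j - orth_proj (span (sv ` {1..<j})) (sv j))"
      unfolding set by simp
  qed
  have nbR: "nb \<le> R * \<tau> ^ (2 * p)"
  proof -
    have "nb \<le> \<mu> ^ b * norm (r 0)" unfolding nb_def using inv[of b] bt by simp
    also have "\<dots> \<le> norm (r 0)" using mu by (simp add: mult_left_le_one_le power_le_one)
    also have "\<dots> = norm (f x0)" using rf[of 0] x_0 by simp
    finally show ?thesis using x0(4) unfolding p_def by simp
  qed
  have svb: "\<And>j. j \<in> {1..t} \<Longrightarrow> (1 - \<mu>) * nb \<le> norm (sv j) \<and> norm (sv j) \<le> 2 * nb"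
  proof -
    fix j assume j: "j \<in> {1..t}"
    have "\<mu> ^ j \<le> \<mu>" using j mu by (simp add: power_le_imp_le_exp power_decreasing[of 1 j \<mu>, simplified])
    then have "norm (r (b + j)) \<le> \<mu> * nb" using W2[of j] j nb0 by (smt (verit) atLeastAtMost_iff mult_right_mono)
    moreover have "\<mu> * nb \<le> nb" using mu nb0 by simp
    moreover have "norm (sv j) = norm (r b - r (b + j))" unfolding sv_def by (simp add: norm_minus_commute)
    ultimately show "(1 - \<mu>) * nb \<le> norm (sv j) \<and> norm (sv j) \<le> 2 * nb"
      using norm_triangle_ineq2[of "r b" "r (b + j)"] norm_triangle_ineq4[of "r b" "r (b + j)"]
      unfolding nb_def by (simp add: algebra_simps)
  qed
  have dimj: "\<And>j. j \<le> t \<Longrightarrow> dim (sv ` {1..<Suc j}) = j"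
  proof -
    fix j show "j \<le> t \<Longrightarrow> dim (sv ` {1..<Suc j}) = j"
    proof (induction j)
      case 0 then show ?case by simp
    next
      case (Suc j)
      have sj: "Suc j \<in> {1..t}" using Suc.prems by simp
      have notin: "sv (Suc j) \<notin> span (sv ` {1..<Suc j})"
      proof
        assume "sv (Suc j) \<in> span (sv ` {1..<Suc j})"
        then have "orth_proj (span (sv ` {1..<Suc j})) (sv (Suc j)) = sv (Suc j)"
          by (intro orth_proj_id) auto
        then have "\<tau> * norm (sv (Suc j)) \<le> 0" using W3[OF sj] by simp
        moreover have "0 < \<tau> * norm (sv (Suc j))" using svb[OF sj] nb0 mu tau
          by (smt (verit) mult_pos_pos)
        ultimately show False by simp
      qed
      have "{1..<Suc (Suc j)} = insert (Suc j) {1..<Suc j}" by auto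
      then have "sv ` {1..<Suc (Suc j)} = insert (sv (Suc j)) (sv ` {1..<Suc j})" by simp
      then show ?case using Suc notin by (simp add: dim_insert)
    qed
  qed
  have tp: "t \<le> p" using dimj[of t] dim_subset_UNIV[of "sv ` {1..<Suc t}"] unfolding p_def by simp
  have L1': "(\<Sum>i\<le>t. c k i) = 1" using live(1)[OF rk] unfolding t_def .
  have L2': "\<And>d. (\<Sum>i\<le>t. d i) = 1 \<Longrightarrow> norm (\<Sum>i\<le>t. c k i *\<^sub>R r (b + i)) \<le> norm (\<Sum>i\<le>t. d i *\<^sub>R r (b + i))"
    using live(2)[OF rk] by (simp add: t_def[symmetric] b_def[symmetric])
  have L3': "x (Suc k) = (if vA then (\<Sum>i\<le>t. c k i *\<^sub>R g (x (b + i))) else g (\<Sum>i\<le>t. c k i *\<^sub>R x (b + i)))"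
    using live(3)[OF rk] by (simp add: t_def[symmetric] b_def[symmetric])
  have setk: "{r j - r b | j. b + 1 \<le> j \<and> j \<le> k} = sv ` {1..t}"
    using set_idx[of "\<lambda>j. r j - r b" b t] bt(1) unfolding sv_def by simp
  have L4': "r (Suc k) \<noteq> 0 \<Longrightarrow> m (Suc k) = (if \<tau> * norm (r (Suc k) - r b) >
         norm ((r (Suc k) - r b) - orth_proj (span (sv ` {1..t})) (r (Suc k) - r b)) then 0 else Suc t)"
    using live(4)[OF rk] setk by (simp add: t_def[symmetric] b_def[symmetric])
  define w where "w = (\<Sum>i\<le>t. c k i *\<^sub>R r (b + i))"
  have wmin: "\<And>d. (\<Sum>i\<le>t. d i) = 1 \<Longrightarrow> norm w \<le> norm (\<Sum>i\<le>t. d i *\<^sub>R r (b + i))"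
    unfolding w_def by (rule L2')
  have wk: "norm w \<le> norm (r k)"
  proof -
    define d where "d = (\<lambda>i. if i = t then 1 else (0::real))"
    have "(\<Sum>i\<le>t. d i) = 1" unfolding d_def by simp
    moreover have "(\<Sum>i\<le>t. d i *\<^sub>R r (b + i)) = (\<Sum>i\<le>t. if i = t then r (b + i) else 0)"
      by (rule sum.cong) (auto simp: d_def)
    moreover have "(\<Sum>i\<le>t. if i = t then r (b + i) else 0) = r k" using bt(1) by simp
    ultimately show ?thesis using wmin by metis
  qed
  have nrk: "norm (r k) \<le> \<mu> ^ t * nb" using W2[of t] bt(1) by simp
  have mut: "\<mu> ^ t \<le> 1" using mu by (simp add: power_le_one)
  have wdec: "w - r b = (\<Sum>j\<in>{1..t}. c k j *\<^sub>R sv j)"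
  proof -
    have w1: "w = c k 0 *\<^sub>R r b + (\<Sum>j\<in>{1..t}. c k j *\<^sub>R r (b + j))"
      unfolding w_def by (subst sum_split0) simp
    have c0: "c k 0 = 1 - (\<Sum>j\<in>{1..t}. c k j)" using L1' sum_split0[of "c k" t] by simp
    have "(\<Sum>j\<in>{1..t}. c k j *\<^sub>R sv j) = (\<Sum>j\<in>{1..t}. c k j *\<^sub>R r (b + j)) - (\<Sum>j\<in>{1..t}. c k j) *\<^sub>R r b"
      unfolding sv_def by (simp add: scaleR_diff_right sum_subtractf scaleR_sum_left)
    then have h: "(\<Sum>j\<in>{1..t}. c k j *\<^sub>R r (b + j)) - (\<Sum>j\<in>{1..t}. c k j) *\<^sub>R r b = (\<Sum>j\<in>{1..t}. c k j *\<^sub>R sv j)" by simp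
    have "w - r b = c k 0 *\<^sub>R r b + (\<Sum>j\<in>{1..t}. c k j *\<^sub>R r (b + j)) - r b" using w1 by simp
    also have "\<dots> = (1 - (\<Sum>j\<in>{1..t}. c k j)) *\<^sub>R r b + (\<Sum>j\<in>{1..t}. c k j *\<^sub>R r (b + j)) - r b" using c0 by simp
    also have "\<dots> = (\<Sum>j\<in>{1..t}. c k j *\<^sub>R r (b + j)) - (\<Sum>j\<in>{1..t}. c k j) *\<^sub>R r b"
      by (simp add: scaleR_diff_left)
    finally show ?thesis using h by simp
  qed
  have sumb: "norm (\<Sum>j\<in>{1..t}. c k j *\<^sub>R sv j) \<le> 2 * nb"
  proof -
    have "norm (w - r b) \<le> norm w + nb" unfolding nb_def by (rule norm_triangle_ineq4)
    moreover have "\<mu> ^ t * nb \<le> nb" using mut nb0 by (simp add: mult_left_le_one_le)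
    ultimately show ?thesis using wk nrk wdec by simp
  qed
  have Xnb: "0 < X * nb" using X nb0 by simp
  have cb: "\<forall>j\<in>{1..t}. \<bar>c k j\<bar> \<le> (2*nb) * (1 + (2*nb)/(X*nb))^(t - j) / (X*nb)"
  proof (rule coef_bound[where s=sv])
    show "\<forall>j\<in>{1..t}. X * nb \<le> norm (sv j - orth_proj (span (sv ` {1..<j})) (sv j))"
    proof
      fix j assume j: "j \<in> {1..t}"
      have "X * nb = \<tau> * ((1 - \<mu>) * nb)" unfolding X_def by simp
      also have "\<dots> \<le> \<tau> * norm (sv j)" using svb[OF j] tau by (intro mult_left_mono) auto
      also have "\<dots> \<le> norm (sv j - orth_proj (span (sv ` {1..<j})) (sv j))" using W3[OF j] .
      finally show "X * nb \<le> norm (sv j - orth_proj (span (sv ` {1..<j})) (sv j))" .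
    qed
    show "\<forall>j\<in>{1..t}. norm (sv j) \<le> 2 * nb" using svb by blast
  qed (use Xnb sumb in auto)
  define A where "A = 2 * 3 ^ t / X ^ t"
  have A0: "0 \<le> A" unfolding A_def using X by simp
  have cj: "\<And>j. j \<in> {1..t} \<Longrightarrow> \<bar>c k j\<bar> \<le> A"
  proof -
    fix j assume j: "j \<in> {1..t}"
    have "\<bar>c k j\<bar> \<le> (2*nb) * (1 + (2*nb)/(X*nb))^(t - j) / (X*nb)" using cb j by blast
    also have "\<dots> = 2 * (1 + 2 / X) ^ (t - j) / X"
      using nb0 X by simp
    also have "\<dots> \<le> A" using arith_coef[OF X, of j t] j unfolding A_def by auto
    finally show "\<bar>c k j\<bar> \<le> A" .
  qed
  have c0b: "\<bar>c k 0\<bar> \<le> 1 + real t * A"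
  proof -
    have "c k 0 = 1 - (\<Sum>j\<in>{1..t}. c k j)" using L1' sum_split0[of "c k" t] by simp
    then have "\<bar>c k 0\<bar> \<le> 1 + \<bar>\<Sum>j\<in>{1..t}. c k j\<bar>" by simp
    also have "\<bar>\<Sum>j\<in>{1..t}. c k j\<bar> \<le> (\<Sum>j\<in>{1..t}. \<bar>c k j\<bar>)" by (rule sum_abs)
    also have "\<dots> \<le> real (card {1..t}) * A" by (rule sum_bounded_above) (use cj in auto)
    finally show ?thesis by simp
  qed
  have cfin: "\<forall>i\<le>t. \<bar>c k i\<bar> \<le> Cc t * (1 + 1 / X ^ t)"
  proof (intro allI impI)
    fix i assume i: "i \<le> t"
    define a where "a = 2 * real (t + 1) * 3 ^ t"
    define q where "q = 1 / X ^ t"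
    have a0: "0 \<le> a" and q0: "0 \<le> q" unfolding a_def q_def using X by auto
    have Aq: "real (t + 1) * A = a * q" unfolding A_def a_def q_def by simp
    have "\<bar>c k i\<bar> \<le> 1 + real (t + 1) * A"
    proof (cases "i = 0")
      case True then show ?thesis using c0b A0 by (simp add: algebra_simps)
    next
      case False
      then have "i \<in> {1..t}" using i by auto
      then have "\<bar>c k i\<bar> \<le> A" by (rule cj)
      moreover have "A \<le> 1 + real (t + 1) * A" using A0 by (simp add: algebra_simps)
      ultimately show ?thesis by linarith
    qed
    also have "\<dots> = 1 + a * q" using Aq by simp
    also have "\<dots> \<le> (1 + a) * (1 + q)" using a0 q0 by (simp add: algebra_simps)
    also have "\<dots> = Cc t * (1 + 1 / X ^ t)" unfolding a_def q_def Cc_def by simp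
    finally show "\<bar>c k i\<bar> \<le> Cc t * (1 + 1 / X ^ t)" .
  qed
  define Sb where "Sb = 2 * (real p + 1) * Cc p / X ^ t"
  have Xt: "0 < X ^ t" "X ^ t \<le> 1" using X by (auto simp: power_le_one)
  have Ssum: "(\<Sum>i\<le>t. \<bar>c k i\<bar>) \<le> Sb"
  proof -
    have "(\<Sum>i\<le>t. \<bar>c k i\<bar>) \<le> real (card {..t}) * (Cc t * (1 + 1 / X ^ t))"
      by (rule sum_bounded_above) (use cfin in auto)
    also have "\<dots> = real (t + 1) * (Cc t * (1 + 1 / X ^ t))" by simp
    also have "\<dots> \<le> (real p + 1) * (Cc p * (2 / X ^ t))"
    proof (intro mult_mono)
      show "real (t + 1) \<le> real p + 1" using tp by simp
      show "Cc t \<le> Cc p" using Cc_mono[OF tp] .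
      have "1 \<le> 1 / X ^ t" using Xt by simp
      then show "1 + 1 / X ^ t \<le> 2 / X ^ t" by simp
    qed (use Cc_pos[of t] Cc_pos[of p] Xt in auto)
    also have "\<dots> = Sb" unfolding Sb_def by simp
    finally show ?thesis .
  qed
  have Sb1: "1 \<le> Sb" using S_ge1[OF L1' Ssum] .
  have Sb2: "Sb\<^sup>2 \<le> Zc p \<mu> / \<tau> ^ (2 * t)"
    unfolding Sb_def X_def using arith_Sb[OF tau mu tp] by simp
  have Z0: "0 \<le> Zc p \<mu>" unfolding Zc_def using mu by simp
  have SbR: "Sb\<^sup>2 * nb \<le> Zc p \<mu> * R"
    by (rule arith_R[OF tau tp _ nbR Sb2 Z0 Rs(1)]) (use nb0 in auto)
  have SbR1: "Sb * nb \<le> Zc p \<mu> * R"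
  proof -
    have "Sb * nb \<le> Sb\<^sup>2 * nb" using Sb1 nb0 by (simp add: power2_eq_square mult_right_mono)
    then show ?thesis using SbR by simp
  qed
  define \<epsilon> where "\<epsilon> = nb / \<sigma>"
  have eps0: "0 \<le> \<epsilon>" unfolding \<epsilon>_def using nb0 sig by simp
  have Seps: "Sb * \<epsilon> \<le> \<rho>"
  proof -
    have "Sb * \<epsilon> = (Sb * nb) / \<sigma>" unfolding \<epsilon>_def by simp
    also have "\<dots> \<le> (Zc p \<mu> * R) / \<sigma>" using SbR1 sig by (simp add: divide_right_mono)
    also have "\<dots> \<le> \<rho>" using Rs(2) sig unfolding p_def by (simp add: pos_divide_le_eq)
    finally show ?thesis .
  qed
  have xxb: "\<forall>i\<le>t. x (b + i) \<in> \<Sigma> \<and> x (b + i) \<in> V \<and> norm (x (b + i) - xs) \<le> \<epsilon>"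
  proof (intro allI impI)
    fix i assume i: "i \<le> t"
    have bik: "b + i \<le> k" using i bt(1) by simp
    have xi: "x (b + i) \<in> \<Sigma>" "x (b + i) \<in> V" using inv[OF bik] by auto
    have "\<sigma> * norm (x (b + i) - xs) \<le> norm (r (b + i))" using sigb[OF xi(2) xi(1)] rf by simp
    also have "\<dots> \<le> \<mu> ^ i * nb" using W2[OF i] .
    also have "\<dots> \<le> nb" using mu nb0 by (simp add: mult_left_le_one_le power_le_one)
    finally have "norm (x (b + i) - xs) \<le> \<epsilon>" unfolding \<epsilon>_def using sig by (simp add: pos_le_divide_eq mult.commute)
    then show "x (b + i) \<in> \<Sigma> \<and> x (b + i) \<in> V \<and> norm (x (b + i) - xs) \<le> \<epsilon>" using xi by simp
  qed
  note st = step[OF xxb L1' Ssum eps0 Seps]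
  have yV: "(\<Sum>i\<le>t. c k i *\<^sub>R x (b + i)) \<in> V" using st by simp
  have xS: "x (Suc k) \<in> \<Sigma>" "x (Suc k) \<in> V" using st L3' by simp_all
  define E where "E = G * Sb\<^sup>2 * \<epsilon>\<^sup>2"
  have wf: "(\<Sum>i\<le>t. c k i *\<^sub>R f (x (b + i))) = w" unfolding w_def using rf by simp
  have rS: "norm (r (Suc k)) \<le> K * norm w + E"
    using st L3' rf[of "Suc k"] wf unfolding E_def by simp
  have E1: "E \<le> (\<mu> - K) * \<mu> ^ t * nb"
  proof -
    have "E = G * (Sb\<^sup>2 * nb) * nb / \<sigma>\<^sup>2" unfolding E_def \<epsilon>_def by (simp add: power2_eq_square)
    also have "\<dots> \<le> G * (Zc p \<mu> * R) * nb / \<sigma>\<^sup>2"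
      using SbR G nb0 by (intro divide_right_mono mult_right_mono mult_left_mono) auto
    also have "\<dots> \<le> (\<mu> - K) * \<mu> ^ p * \<sigma>\<^sup>2 * nb / \<sigma>\<^sup>2"
      using Rs(3) nb0 unfolding p_def by (intro divide_right_mono mult_right_mono) (auto simp: mult.assoc)
    also have "\<dots> = (\<mu> - K) * \<mu> ^ p * nb" using sig by simp
    also have "\<dots> \<le> (\<mu> - K) * \<mu> ^ t * nb"
    proof -
      have "\<mu> ^ p \<le> \<mu> ^ t" by (rule power_decreasing) (use tp mu in auto)
      then show ?thesis using K nb0 by (intro mult_right_mono mult_left_mono) auto
    qed
    finally show ?thesis .
  qed
  have E2: "E \<le> Gam / \<tau> ^ (2 * t) * nb\<^sup>2"
  proof -
    have "E = G * Sb\<^sup>2 * nb\<^sup>2 / \<sigma>\<^sup>2" unfolding E_def \<epsilon>_def by (simp add: power_divide)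
    also have "\<dots> \<le> G * (Zc p \<mu> / \<tau> ^ (2 * t)) * nb\<^sup>2 / \<sigma>\<^sup>2"
      using Sb2 G by (intro divide_right_mono mult_right_mono mult_left_mono) auto
    also have "\<dots> = (G * Zc p \<mu> / \<sigma>\<^sup>2) / \<tau> ^ (2 * t) * nb\<^sup>2" by simp
    also have "\<dots> \<le> Gam / \<tau> ^ (2 * t) * nb\<^sup>2"
      unfolding Gam_def p_def using tau by (intro mult_right_mono divide_right_mono) auto
    finally show ?thesis .
  qed
  have rS2: "norm (r (Suc k)) \<le> \<mu> ^ (t + 1) * nb"
  proof -
    have "K * norm w \<le> K * (\<mu> ^ t * nb)" using wk nrk K by (intro mult_left_mono) auto
    then have "norm (r (Suc k)) \<le> K * (\<mu> ^ t * nb) + (\<mu> - K) * \<mu> ^ t * nb" using rS E1 by linarith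
    also have "\<dots> = \<mu> ^ (t + 1) * nb" by (simp add: algebra_simps)
    finally show ?thesis .
  qed
  have restart: "m (Suc k) = 0 \<Longrightarrow> (1 - K * (1 + \<tau>)) * norm (r (Suc k)) \<le> (K * \<tau> + Gam / \<tau> ^ (2 * t) * nb) * nb"
  proof -
    assume m0: "m (Suc k) = 0"
    have Gam0: "0 \<le> Gam" unfolding Gam_def using G Z0 sig unfolding p_def by simp
    have rhs0: "0 \<le> (K * \<tau> + Gam / \<tau> ^ (2 * t) * nb) * nb" using K tau Gam0 nb0 by simp
    show ?thesis
    proof (cases "r (Suc k) = 0")
      case True then show ?thesis using rhs0 by simp
    next
      case False
      define T where "T = span (sv ` {1..t})"
      have sT: "subspace T" unfolding T_def by simp
      define Pi where "Pi = orth_proj T"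
      define s where "s = r (Suc k) - r b"
      have cond: "\<tau> * norm s > norm (s - Pi s)"
        using L4'[OF False] m0 unfolding s_def Pi_def T_def by (auto split: if_splits)
      have lP: "linear Pi" unfolding Pi_def using orth_proj_linear[OF sT] .
      have PiT: "Pi (r b) \<in> T" unfolding Pi_def using orth_proj_char[OF sT] by blast
      then obtain \<gamma> where \<gamma>: "Pi (r b) = (\<Sum>l\<in>{1..t}. \<gamma> l *\<^sub>R sv l)"
        using span_image_sum[of "{1..t}" "Pi (r b)" sv] unfolding T_def by auto
      define d where "d = (\<lambda>i. if i = 0 then 1 + (\<Sum>l\<in>{1..t}. \<gamma> l) else - \<gamma> i)"
      have d1: "(\<Sum>i\<le>t. d i) = 1"
      proof -
        have "(\<Sum>i\<in>{1..t}. d i) = (\<Sum>i\<in>{1..t}. - \<gamma> i)" by (rule sum.cong) (auto simp: d_def)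
        then show ?thesis by (subst sum_split0) (simp add: d_def sum_negf)
      qed
      have d2: "(\<Sum>i\<le>t. d i *\<^sub>R r (b + i)) = r b - Pi (r b)"
      proof -
        have "(\<Sum>i\<in>{1..t}. d i *\<^sub>R r (b + i)) = (\<Sum>i\<in>{1..t}. - (\<gamma> i *\<^sub>R r (b + i)))"
          by (rule sum.cong) (auto simp: d_def)
        moreover have "Pi (r b) = (\<Sum>l\<in>{1..t}. \<gamma> l *\<^sub>R r (b + l)) - (\<Sum>l\<in>{1..t}. \<gamma> l) *\<^sub>R r b"
          unfolding \<gamma> sv_def by (simp add: scaleR_diff_right sum_subtractf scaleR_sum_left)
        ultimately show ?thesis
          by (subst sum_split0) (simp add: d_def sum_negf algebra_simps)
      qed
      have nw: "norm w \<le> norm (r b - Pi (r b))" using wmin[OF d1] d2 by simp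
      have "r b - Pi (r b) = (r (Suc k) - Pi (r (Suc k))) - (s - Pi s)"
        unfolding s_def using lP by (simp add: linear_diff algebra_simps)
      then have "norm (r b - Pi (r b)) \<le> norm (r (Suc k) - Pi (r (Suc k))) + norm (s - Pi s)"
        by (metis norm_triangle_ineq4)
      moreover have "norm (r (Suc k) - Pi (r (Suc k))) \<le> norm (r (Suc k))"
        unfolding Pi_def by (rule orth_proj_norm[OF sT])
      moreover have "norm s \<le> norm (r (Suc k)) + nb" unfolding s_def nb_def by (rule norm_triangle_ineq4)
      ultimately have "norm w \<le> norm (r (Suc k)) + \<tau> * (norm (r (Suc k)) + nb)"
        using nw cond tau mult_left_mono[of "norm s" "norm (r (Suc k)) + nb" \<tau>] by linarith
      then have "K * norm w \<le> K * (norm (r (Suc k)) + \<tau> * (norm (r (Suc k)) + nb))"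
        using K by (intro mult_left_mono) auto
      then have "norm (r (Suc k)) \<le> K * (norm (r (Suc k)) + \<tau> * (norm (r (Suc k)) + nb)) + Gam / \<tau> ^ (2 * t) * nb\<^sup>2"
        using rS E2 by linarith
      then show ?thesis by (simp add: algebra_simps power2_eq_square)
    qed
  qed
  show ?thesis
    unfolding GoodC_def unfolding bt(2) unfolding t_def[symmetric]
    using tp tk cfin rS2 yV xS restart unfolding p_def X_def nb_def by simp
qed

lemma good_all: "r k \<noteq> 0 \<Longrightarrow> GoodC k"
proof (induction k rule: less_induct)
  case (less k)
  then show ?case using good_step[of k] by blast
qed

end




theorem theorem3p1:
  fixes f :: "'a::euclidean_space \<Rightarrow> 'b::euclidean_space"
    and g :: "'a \<Rightarrow> 'a"
    and \<Sigma> V U :: "'a set"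
    and xs :: 'a
    and K \<sigma> :: real
    and vA :: bool
  assumes manifold: "smooth_submanifold \<Sigma>"
    and V_open: "open V"
    and f_C2: "Ck_on 2 V f"
    and g_C2: "Ck_on 2 V g" and g_into: "g ` V \<subseteq> \<Sigma>"
    and xs_in: "xs \<in> V" "xs \<in> \<Sigma>" and g_fix: "g xs = xs" and f_zero: "f xs = 0"
    and assm1: "0 < K" "K < 1"
      "\<And>x. x \<in> V \<Longrightarrow> g x \<in> V \<Longrightarrow> x \<in> \<Sigma> \<Longrightarrow> norm (f (g x)) \<le> K * norm (f x)"
    and assm2: "\<sigma> > 0" "\<And>x. x \<in> V \<Longrightarrow> x \<in> \<Sigma> \<Longrightarrow> \<sigma> * norm (x - xs) \<le> norm (f x)"
    and U_open: "open U" and xs_U: "xs \<in> U"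
    and U_sub: "\<And>x. x \<in> U \<Longrightarrow> x \<in> V \<and> g x \<in> V"
    and U_i: "\<And>x y. x \<in> U \<Longrightarrow> y \<in> U \<Longrightarrow>
        norm (f x - f y) \<le> 2 * onorm (frechet_derivative f (at xs)) * norm (x - y)"
      "\<And>x y. x \<in> U \<Longrightarrow> y \<in> U \<Longrightarrow>
        norm (f (g x) - f (g y))
          \<le> 2 * onorm (frechet_derivative f (at xs) \<circ> frechet_derivative g (at xs)) * norm (x - y)"
    and U_ii: "\<exists>L L'. L > 0 \<and> L' > 0 \<and>
        (\<forall>x\<in>U. norm (f x - frechet_derivative f (at xs) (x - xs)) \<le> L / 2 * (norm (x - xs))\<^sup>2) \<and>
        (\<forall>x\<in>U. norm (g x - xs - frechet_derivative g (at xs) (x - xs)) \<le> L' / 2 * (norm (x - xs))\<^sup>2)"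
    and U_iii: "\<forall>x\<in>U. \<exists>!y. y \<in> \<Sigma> \<and> (\<forall>z\<in>\<Sigma>. dist x y \<le> dist x z)"
      "\<forall>x\<in>U. nearest_proj \<Sigma> x \<in> U"
      "smooth_on U (nearest_proj \<Sigma>)"
      "\<exists>M>0. \<forall>x\<in>U. norm (nearest_proj \<Sigma> x - (xs + orth_proj (tangent_space \<Sigma> xs) (x - xs)))
                        \<le> M / 2 * (norm (x - xs))\<^sup>2"
    and versionA: "vA \<longrightarrow> \<Sigma> = UNIV"
  shows "\<exists>C::nat \<Rightarrow> real. (\<forall>j. C j > 0) \<and>
    (\<forall>\<mu>. K < \<mu> \<and> \<mu> < 1 \<longrightarrow>
      (\<exists>R > 0. \<exists>\<Gamma> > 0. \<forall>\<tau> x0 x r m c.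
         0 < \<tau> \<and> \<tau> < 1 \<and> x0 \<in> U \<and> x0 \<in> \<Sigma> \<and>
         0 < norm (f x0) \<and> norm (f x0) \<le> R * \<tau> ^ (2 * DIM('b)) \<and>
         AP_run f g \<tau> vA x0 x r m c
         \<longrightarrow>
         (\<forall>k. x k \<in> V \<and>
              (r k \<noteq> 0 \<longrightarrow> (\<Sum>i\<le>m k. c k i *\<^sub>R x (k - m k + i)) \<in> V)) \<and>
         (\<forall>k. r k \<noteq> 0 \<longrightarrow>
              m k \<le> min k DIM('b) \<and>
              (\<forall>i\<le>m k. \<bar>c k i\<bar> \<le> C (m k) * (1 + 1 / (\<tau> * (1 - \<mu>)) ^ m k)) \<and>
              norm (r (Suc k)) \<le> \<mu> ^ (m k + 1) * norm (r (k - m k))) \<and>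
         (\<forall>k. norm (r k) \<le> \<mu> ^ k * norm (r 0)) \<and>
         (\<forall>k. m (Suc k) = 0 \<longrightarrow>
              (1 - K * (1 + \<tau>)) * norm (r (Suc k))
                \<le> (K * \<tau> + \<Gamma> / \<tau> ^ (2 * m k) * norm (r (k - m k))) * norm (r (k - m k)))))"
proof -
  define D where "D = frechet_derivative f (at xs)"
  define E where "E = frechet_derivative g (at xs)"
  have hD: "(f has_derivative D) (at xs)"
    unfolding D_def by (rule frechet_derivative_works[THEN iffD1, OF Ck_diff[OF f_C2 _ xs_in(1)]]) simp
  have hE: "(g has_derivative E) (at xs)"
    unfolding E_def by (rule frechet_derivative_works[THEN iffD1, OF Ck_diff[OF g_C2 _ xs_in(1)]]) simp
  have bD: "bounded_linear D" using hD by (rule has_derivative_bounded_linear)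
  have bE: "bounded_linear E" using hE by (rule has_derivative_bounded_linear)
  have bDE: "bounded_linear (D \<circ> E)" using bounded_linear_compose[OF bD bE] by (simp add: comp_def)
  have lD: "linear D" using bD bounded_linear.linear by blast
  have lE: "linear E" using bE bounded_linear.linear by blast
  define nD where "nD = onorm D"
  define nE where "nE = onorm E"
  define A1 where "A1 = 2 * onorm D"
  define A2 where "A2 = 2 * onorm (D \<circ> E)"
  have nD0: "0 \<le> nD" unfolding nD_def using onorm_pos_le[OF bD] .
  have nE0: "0 \<le> nE" unfolding nE_def using onorm_pos_le[OF bE] .
  have A10: "0 \<le> A1" unfolding A1_def using onorm_pos_le[OF bD] by simp
  have A20: "0 \<le> A2" unfolding A2_def using onorm_pos_le[OF bDE] by simp
  have nDh: "\<forall>h. norm (D h) \<le> nD * norm h" unfolding nD_def using onorm[OF bD] by blast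
  have nEh: "\<forall>h. norm (E h) \<le> nE * norm h" unfolding nE_def using onorm[OF bE] by blast
  obtain L L' where LL: "L > 0" "L' > 0"
    "\<forall>x\<in>U. norm (f x - D (x - xs)) \<le> L / 2 * (norm (x - xs))\<^sup>2"
    "\<forall>x\<in>U. norm (g x - xs - E (x - xs)) \<le> L' / 2 * (norm (x - xs))\<^sup>2"
    using U_ii unfolding D_def[symmetric] E_def[symmetric] by blast
  define T where "T = tangent_space \<Sigma> xs"
  have sT: "subspace T" unfolding T_def using tangent_subspace[OF manifold xs_in(2)] .
  define Q where "Q = orth_proj T"
  have lQ: "linear Q" unfolding Q_def using orth_proj_linear[OF sT] .
  define P where "P = nearest_proj \<Sigma>"
  obtain M where M0: "M > 0" "\<forall>x\<in>U. norm (nearest_proj \<Sigma> x - (xs + orth_proj (tangent_space \<Sigma> xs) (x - xs)))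
                        \<le> M / 2 * (norm (x - xs))\<^sup>2"
    using U_iii(4) by blast
  have M: "M > 0" "\<forall>x\<in>U. norm (P x - (xs + Q (x - xs))) \<le> M / 2 * (norm (x - xs))\<^sup>2"
    using M0 unfolding P_def Q_def T_def by simp_all
  have PU: "\<forall>x\<in>U. P x \<in> U \<and> P x \<in> \<Sigma>"
  proof
    fix y assume y: "y \<in> U"
    have "P y \<in> \<Sigma> \<and> (\<forall>z\<in>\<Sigma>. dist y (P y) \<le> dist y z)"
      unfolding P_def nearest_proj_def by (rule theI'[OF U_iii(1)[rule_format, OF y]])
    then show "P y \<in> U \<and> P y \<in> \<Sigma>" using U_iii(2) y unfolding P_def by blast
  qed
  have Pid: "\<forall>x\<in>U. x \<in> \<Sigma> \<longrightarrow> P x = x"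
  proof (intro ballI impI)
    fix y assume y: "y \<in> U" "y \<in> \<Sigma>"
    have "\<exists>!z. z \<in> \<Sigma> \<and> (\<forall>w\<in>\<Sigma>. dist y z \<le> dist y w)" using U_iii(1) y by blast
    moreover have "y \<in> \<Sigma> \<and> (\<forall>w\<in>\<Sigma>. dist y y \<le> dist y w)" using y by simp
    ultimately show "P y = y" unfolding P_def nearest_proj_def by (rule the1_equality)
  qed
  have fL: "\<forall>x\<in>U. \<forall>y\<in>U. norm (f x - f y) \<le> A1 * norm (x - y)"
    using U_i(1) unfolding A1_def D_def by blast
  have fgL: "\<forall>x\<in>U. \<forall>y\<in>U. norm (f (g x) - f (g y)) \<le> A2 * norm (x - y)"
    using U_i(2) unfolding A2_def D_def E_def by blast
  have KcP: "\<forall>x\<in>U. x \<in> \<Sigma> \<longrightarrow> norm (f (g x)) \<le> K * norm (f x)"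
    using assm1(3) U_sub by blast
  obtain \<delta> where \<delta>: "\<delta> > 0" "ball xs \<delta> \<subseteq> U" using U_open xs_U open_contains_ball by blast
  define GP where "GP = K*L + (A2 + K*A1)*M"
  define GA where "GA = K*L + nD*L' + L*(nE+1)\<^sup>2"
  define G where "G = GP + GA"
  have GP0: "0 \<le> GP" unfolding GP_def using assm1 LL M A10 A20 by simp
  have GA0: "0 \<le> GA" unfolding GA_def using assm1 LL nD0 by simp
  have G0: "0 \<le> G" unfolding G_def using GP0 GA0 by simp
  define \<rho> where "\<rho> = min (\<delta> / (2 * (nE + 1))) (1 / (L' + 1))"
  have rho0: "0 < \<rho>" unfolding \<rho>_def using \<delta> nE0 LL by simp
  have stepall: "\<And>(xx::nat \<Rightarrow> 'a) cc t \<epsilon> S. (\<forall>i\<le>t. xx i \<in> \<Sigma> \<and> xx i \<in> V \<and> norm (xx i - xs) \<le> \<epsilon>) \<Longrightarrow>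
        (\<Sum>i\<le>t. cc i) = 1 \<Longrightarrow> (\<Sum>i\<le>t. \<bar>cc i\<bar>) \<le> S \<Longrightarrow> 0 \<le> \<epsilon> \<Longrightarrow> S * \<epsilon> \<le> \<rho> \<Longrightarrow>
      (\<Sum>i\<le>t. cc i *\<^sub>R xx i) \<in> V \<and>
      (if vA then (\<Sum>i\<le>t. cc i *\<^sub>R g (xx i)) else g (\<Sum>i\<le>t. cc i *\<^sub>R xx i)) \<in> \<Sigma> \<and>
      (if vA then (\<Sum>i\<le>t. cc i *\<^sub>R g (xx i)) else g (\<Sum>i\<le>t. cc i *\<^sub>R xx i)) \<in> V \<and>
      norm (f (if vA then (\<Sum>i\<le>t. cc i *\<^sub>R g (xx i)) else g (\<Sum>i\<le>t. cc i *\<^sub>R xx i)))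
        \<le> K * norm (\<Sum>i\<le>t. cc i *\<^sub>R f (xx i)) + G * S\<^sup>2 * \<epsilon>\<^sup>2"
  proof -
    fix xx :: "nat \<Rightarrow> 'a" and cc t \<epsilon> S
    assume xx: "\<forall>i\<le>t. xx i \<in> \<Sigma> \<and> xx i \<in> V \<and> norm (xx i - xs) \<le> \<epsilon>"
      and cs: "(\<Sum>i\<le>t. cc i) = 1" and S: "(\<Sum>i\<le>t. \<bar>cc i\<bar>) \<le> S" and e0: "0 \<le> \<epsilon>" and Se: "S * \<epsilon> \<le> \<rho>"
    have S1: "1 \<le> S" using S_ge1[OF cs S] .
    have SeS: "0 \<le> S * \<epsilon>" using S1 e0 by simp
    have Se1: "(nE + 1) * (S * \<epsilon>) < \<delta>"
    proof -
      have "S * \<epsilon> \<le> \<delta> / (2 * (nE + 1))" using Se unfolding \<rho>_def by simp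
      then have "(nE + 1) * (S * \<epsilon>) \<le> (nE + 1) * (\<delta> / (2 * (nE + 1)))" using nE0 by (intro mult_left_mono) auto
      also have "\<dots> = \<delta> / 2"
      proof -
        have ne: "nE + 1 \<noteq> 0" "2 * nE + 2 \<noteq> 0" using nE0 by auto
        then show ?thesis by (simp add: field_simps)
      qed
      also have "\<dots> < \<delta>" using \<delta> by simp
      finally show ?thesis .
    qed
    have "0 \<le> nE * (S * \<epsilon>)" using SeS nE0 by simp
    then have "S * \<epsilon> \<le> (nE + 1) * (S * \<epsilon>)" by (simp add: distrib_right)
    then have Se2: "S * \<epsilon> < \<delta>" using Se1 by linarith
    have Le: "L' * (S * \<epsilon>) \<le> 2"
    proof -
      have "S * \<epsilon> \<le> 1 / (L' + 1)" using Se unfolding \<rho>_def by simp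
      then have "L' * (S * \<epsilon>) \<le> L' * (1 / (L' + 1))" using LL by (intro mult_left_mono) auto
      also have "\<dots> \<le> 1" using LL by simp
      finally show ?thesis by simp
    qed
    have SS: "0 \<le> S\<^sup>2 * \<epsilon>\<^sup>2" by simp
    show "?thesis xx cc t \<epsilon> S"
    proof (cases vA)
      case True
      then have SU: "\<Sigma> = UNIV" using versionA by simp
      have KcA: "\<forall>x\<in>U. norm (f (g x)) \<le> K * norm (f x)" using KcP SU by simp
      have xx': "\<forall>i\<le>t. norm (xx i - xs) \<le> \<epsilon>" using xx by simp
      have res: "(\<Sum>i\<le>t. cc i *\<^sub>R xx i) \<in> U \<and> (\<Sum>i\<le>t. cc i *\<^sub>R g (xx i)) \<in> U \<and>
        norm (f (\<Sum>i\<le>t. cc i *\<^sub>R g (xx i))) \<le> K * norm (\<Sum>i\<le>t. cc i *\<^sub>R f (xx i))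
         + GA * S\<^sup>2 * \<epsilon>\<^sup>2"
        unfolding GA_def
        by (rule stepA[OF lD lE LL(3) LL(4) nDh nEh KcA \<delta>(2) xx' cs S Se1 Le])
           (use assm1 LL nD0 nE0 e0 in auto)
      have "GA * S\<^sup>2 * \<epsilon>\<^sup>2 \<le> G * S\<^sup>2 * \<epsilon>\<^sup>2" unfolding G_def using GP0 SS
        by (simp add: distrib_right mult.assoc)
      then show ?thesis using res True SU U_sub by force
    next
      case False
      have xx': "\<forall>i\<le>t. xx i \<in> \<Sigma> \<and> norm (xx i - xs) \<le> \<epsilon>" using xx by simp
      have res: "(\<Sum>i\<le>t. cc i *\<^sub>R xx i) \<in> U \<and>
        norm (f (g (\<Sum>i\<le>t. cc i *\<^sub>R xx i))) \<le> K * norm (\<Sum>i\<le>t. cc i *\<^sub>R f (xx i)) + GP * S\<^sup>2 * \<epsilon>\<^sup>2"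
        unfolding GP_def
        by (rule stepP[OF lD lQ LL(3) M(2) PU Pid fL fgL KcP \<delta>(2) xx' cs S Se2])
           (use assm1 LL M A10 A20 e0 in auto)
      have "GP * S\<^sup>2 * \<epsilon>\<^sup>2 \<le> G * S\<^sup>2 * \<epsilon>\<^sup>2" unfolding G_def using GA0 SS
        by (simp add: distrib_right mult.assoc)
      moreover have "g (\<Sum>i\<le>t. cc i *\<^sub>R xx i) \<in> \<Sigma>" "g (\<Sum>i\<le>t. cc i *\<^sub>R xx i) \<in> V"
        using res U_sub g_into by auto
      ultimately show ?thesis using res False U_sub by force
    qed
  qed
  show ?thesis
  proof (rule exI[of _ Cc], intro conjI allI impI)
    show "\<And>j. Cc j > 0" using Cc_pos by (metis less_le_trans zero_less_one)
    fix \<mu> :: real assume mu: "K < \<mu> \<and> \<mu> < 1"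
    define p where "p = DIM('b)"
    define Z where "Z = Zc p \<mu>"
    have Z0: "0 < Z" unfolding Z_def Zc_def using mu Cc_pos[of p] by simp
    define R where "R = min (\<rho> * \<sigma> / Z) ((\<mu> - K) * \<mu> ^ p * \<sigma>\<^sup>2 / ((G + 1) * Z))"
    have R0: "0 < R" unfolding R_def using rho0 assm2(1) Z0 mu G0 assm1 by simp
    have R1: "Z * R \<le> \<rho> * \<sigma>"
    proof -
      have "R \<le> \<rho> * \<sigma> / Z" unfolding R_def by simp
      then show ?thesis using Z0 by (simp add: field_simps)
    qed
    have R2: "G * Z * R \<le> (\<mu> - K) * \<mu> ^ p * \<sigma>\<^sup>2"
    proof -
      have "R \<le> (\<mu> - K) * \<mu> ^ p * \<sigma>\<^sup>2 / ((G + 1) * Z)" unfolding R_def by simp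
      moreover have d: "0 < (G + 1) * Z" using Z0 G0 by simp
      ultimately have "R * ((G + 1) * Z) \<le> (\<mu> - K) * \<mu> ^ p * \<sigma>\<^sup>2" by (subst (asm) pos_le_divide_eq[OF d])
      then have "(G + 1) * Z * R \<le> (\<mu> - K) * \<mu> ^ p * \<sigma>\<^sup>2" by (simp add: ac_simps)
      moreover have "G * Z * R \<le> (G + 1) * Z * R" using Z0 R0 by simp
      ultimately show ?thesis by linarith
    qed
    define \<Gamma> where "\<Gamma> = G * Z / \<sigma>\<^sup>2 + 1"
    have \<Gamma>0: "0 < \<Gamma>"
    proof -
      have "0 \<le> G * Z / \<sigma>\<^sup>2" using G0 Z0 by simp
      then show ?thesis unfolding \<Gamma>_def by linarith
    qed
    show "\<exists>R>0. \<exists>\<Gamma>>0. \<forall>\<tau> x0 x r m c.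
         0 < \<tau> \<and> \<tau> < 1 \<and> x0 \<in> U \<and> x0 \<in> \<Sigma> \<and>
         0 < norm (f x0) \<and> norm (f x0) \<le> R * \<tau> ^ (2 * DIM('b)) \<and>
         AP_run f g \<tau> vA x0 x r m c
         \<longrightarrow>
         (\<forall>k. x k \<in> V \<and>
              (r k \<noteq> 0 \<longrightarrow> (\<Sum>i\<le>m k. c k i *\<^sub>R x (k - m k + i)) \<in> V)) \<and>
         (\<forall>k. r k \<noteq> 0 \<longrightarrow>
              m k \<le> min k DIM('b) \<and>
              (\<forall>i\<le>m k. \<bar>c k i\<bar> \<le> Cc (m k) * (1 + 1 / (\<tau> * (1 - \<mu>)) ^ m k)) \<and>
              norm (r (Suc k)) \<le> \<mu> ^ (m k + 1) * norm (r (k - m k))) \<and>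
         (\<forall>k. norm (r k) \<le> \<mu> ^ k * norm (r 0)) \<and>
         (\<forall>k. m (Suc k) = 0 \<longrightarrow>
              (1 - K * (1 + \<tau>)) * norm (r (Suc k))
                \<le> (K * \<tau> + \<Gamma> / \<tau> ^ (2 * m k) * norm (r (k - m k))) * norm (r (k - m k)))"
    proof (rule exI[of _ R], rule conjI[OF R0], rule exI[of _ \<Gamma>], rule conjI[OF \<Gamma>0], (rule allI)+, rule impI, intro conjI)
      fix \<tau> x0 x r m c
      assume H: "0 < \<tau> \<and> \<tau> < 1 \<and> x0 \<in> U \<and> x0 \<in> \<Sigma> \<and>
         0 < norm (f x0) \<and> norm (f x0) \<le> R * \<tau> ^ (2 * DIM('b)) \<and>
         AP_run f g \<tau> vA x0 x r m c"
      interpret A: APrun f g \<Sigma> V xs K \<sigma> \<mu> \<tau> G \<rho> R vA x0 x r m c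
      proof
        show "AP_run f g \<tau> vA x0 x r m c" using H by simp
        show "0 < K" "K < \<mu>" "\<mu> < 1" using assm1 mu by auto
        show "0 < \<tau>" "\<tau> < 1" using H by auto
        show "\<sigma> > 0" by (rule assm2(1))
        show "\<And>y. y \<in> V \<Longrightarrow> y \<in> \<Sigma> \<Longrightarrow> \<sigma> * norm (y - xs) \<le> norm (f y)" by (rule assm2(2))
        show "x0 \<in> \<Sigma>" "x0 \<in> V" "0 < norm (f x0)" "norm (f x0) \<le> R * \<tau> ^ (2 * DIM('b))"
          using H U_sub by auto
        show "0 \<le> G" by (rule G0)
        show "0 < \<rho>" by (rule rho0)
        show "0 \<le> R" using R0 by simp
        show "Zc DIM('b) \<mu> * R \<le> \<rho> * \<sigma>" using R1 unfolding Z_def p_def .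
        show "G * Zc DIM('b) \<mu> * R \<le> (\<mu> - K) * \<mu> ^ DIM('b) * \<sigma>\<^sup>2" using R2 unfolding Z_def p_def .
      qed (rule stepall)
      have Gam: "A.Gam = \<Gamma>" unfolding A.Gam_def \<Gamma>_def Z_def p_def ..
      have good: "\<And>k. r k \<noteq> 0 \<Longrightarrow> A.GoodC k" by (rule A.good_all)
      have inv: "\<And>k. x k \<in> \<Sigma> \<and> x k \<in> V \<and> norm (r k) \<le> \<mu> ^ k * norm (r 0)"
        using A.inv_upto good by blast
      show "\<forall>k. x k \<in> V \<and> (r k \<noteq> 0 \<longrightarrow> (\<Sum>i\<le>m k. c k i *\<^sub>R x (k - m k + i)) \<in> V)"
        using inv good unfolding A.GoodC_def by blast
      show "\<forall>k. r k \<noteq> 0 \<longrightarrow>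
              m k \<le> min k DIM('b) \<and>
              (\<forall>i\<le>m k. \<bar>c k i\<bar> \<le> Cc (m k) * (1 + 1 / (\<tau> * (1 - \<mu>)) ^ m k)) \<and>
              norm (r (Suc k)) \<le> \<mu> ^ (m k + 1) * norm (r (k - m k))"
        using good unfolding A.GoodC_def by blast
      show "\<forall>k. norm (r k) \<le> \<mu> ^ k * norm (r 0)" using inv by blast
      show "\<forall>k. m (Suc k) = 0 \<longrightarrow>
              (1 - K * (1 + \<tau>)) * norm (r (Suc k))
                \<le> (K * \<tau> + \<Gamma> / \<tau> ^ (2 * m k) * norm (r (k - m k))) * norm (r (k - m k))"
      proof (intro allI impI)
        fix k assume mk: "m (Suc k) = 0"
        show "(1 - K * (1 + \<tau>)) * norm (r (Suc k))
                \<le> (K * \<tau> + \<Gamma> / \<tau> ^ (2 * m k) * norm (r (k - m k))) * norm (r (k - m k))"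
        proof (cases "r k = 0")
          case True
          then have "m k = 0" "x (Suc k) = x k" using A.stop by auto
          moreover then have "r (Suc k) = 0" using A.rf True by metis
          ultimately show ?thesis using True by simp
        next
          case False
          then show ?thesis using good[OF False] mk Gam unfolding A.GoodC_def by simp
        qed
      qed
    qed
  qed
qed


end
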